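(* Let $\mu=(p,q,r,s)\in\mathbb{C}^4$ and $\phi\in\Phi_\mu$. Then $\log^+|\phi|=\max\{\log|\phi|,0\}$ has an upper Fibonacci bound on $\Omega$: for a fixed edge $e$ there is $\kappa>0$ with $\log^+|\phi(X)|\le \kappa F_e(X)$ for all $X\in\Omega$.
   Context: Let $\Sigma$ be a countably infinite simplicial tree, properly embedded in the plane, all of whose vertices have degree $3$. A complementary region is the closure of a connected component of the complement of $\Sigma$; $\Omega$ is the set of complementary regions, $E(\Sigma)$ the set of edges. Every edge $e$ is the intersection of exactly two regions $X,Y$, and its two endpoints lie on two further regions $Z,W$ respectively; write $e\leftrightarrow(X,Y;Z,W)$. Three regions meet at each vertex. Fix a coloring $\mathcal C:\Omega\cup E(\Sigma)\to\{1,2,3\}$ such that for every $e\leftrightarrow(X,Y;Z,W)$, $\mathcal C(e)=\mathcal C(Z)=\mathcal C(W)$ and $\mathcal C(e),\mathcal C(X),\mathcal C(Y)$ are pairwise distinct; $\Omega_i$, $E_i$ denote regions/edges of color $i$. For $\mu=(p,q,r,s)\in\mathbb{C}^4$, a $\mu$-Markoff map is $\phi:\Omega\to\mathbb{C}$ such that (i) at every vertex with regions $X\in\Omega_1,Y\in\Omega_2,Z\in\Omega_3$, $x^2+y^2+z^2+xyz=px+qy+rz+s$ where $x=\phi(X)$, etc.; (ii) for $e\in E_1$, $e\leftrightarrow(Y,Z;X,X')$: $\phi(X)+\phi(X')=p-\phi(Y)\phi(Z)$; for $e\in E_2$, $e\leftrightarrow(X,Z;Y,Y')$: $\phi(Y)+\phi(Y')=q-\phi(X)\phi(Z)$;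 for $e\in E_3$, $e\leftrightarrow(X,Y;Z,Z')$: $\phi(Z)+\phi(Z')=r-\phi(X)\phi(Y)$. $\Phi_\mu$ is the set of such maps. Fibonacci function: for a directed edge $\vec e$ with underlying edge $e=X_1\cap X_2$, let $\Omega^0(e)=\{X_1,X_2\}$; removing the interior of $e$ leaves two subtrees $\Sigma^+$ (containing the head of $\vec e$) and $\Sigma^-$; $\Omega^\pm(\vec e)$ is the set of regions whose boundary lies in $\Sigma^\pm$, and $\Omega^{0-}(\vec e)=\Omega^0(e)\cup\Omega^-(\vec e)$. For $Z\in\Omega^{0-}(\vec e)$ let $d(Z)$ be the number of edges in a shortest path from the head of $\vec e$ to $Z$. For $Z\in\Omega^-(\vec e)$ there are exactly two regions $X,Y\in\Omega^{0-}(\vec e)$ with $d(X),d(Y)<d(Z)$ meeting $Z$ (and $X,Y,Z$ meet at a vertex). Define $F_{\vec e}=1$ on $\Omega^0(e)$ and recursively $F_{\vec e}(Z)=F_{\vec e}(X)+F_{\vec e}(Y)$ for such $Z$. Define $F_e(X)=F_{\vec e}(X)$ for $X\in\Omega^{0-}(\vec e)$ and $F_e(X)=F_{-\vec e}(X)$ for $X\in\Omega^+(\vec e)$. *)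

theory Defs
  imports Complex_Main
begin

text \<open>Any countably infinite simplicial tree properly embedded in the plane with all
vertices of degree 3 is, together with its complementary regions, isomorphic to the
dual tree of the Farey tessellation. We use that model: complementary regions are the
extended rationals a/b (including 1/0), represented by coprime integer pairs with a
normalised sign; two regions share an edge iff |ad - bc| = 1; the vertices of \<Sigma> are
the triples of pairwise adjacent regions (Farey triangles).\<close>

type_synonym region = "int \<times> int"

definition Regions :: "region set" where
  "Regions = {(a, b). coprime a b \<and> (b > 0 \<or> (b = 0 \<and> a = 1))}"

definition fdet :: "region \<Rightarrow> region \<Rightarrow> int" where
  "fdet X Y = fst X * snd Y - snd X * fst Y"

definition fadj :: "region \<Rightarrow> region \<Rightarrow> bool" where
  "fadj X Y \<longleftrightarrow> X \<in> Regions \<and> Y \<in> Regions \<and> \<bar>fdet X Y\<bar> = 1"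

text \<open>Edges of \<Sigma>: an edge is identified with the (unordered) pair of regions {X,Y}
whose intersection it is.\<close>
definition Edges :: "region set set" where
  "Edges = {{X, Y} | X Y. fadj X Y}"

text \<open>Vertices of \<Sigma>: a vertex is identified with the set of the three regions meeting there.\<close>
definition Verts :: "region set set" where
  "Verts = {{X, Y, Z} | X Y Z. fadj X Y \<and> fadj Y Z \<and> fadj X Z}"

text \<open>e \<leftrightarrow> (X,Y;Z,W): e = X \<inter> Y and its two endpoints are the vertices {X,Y,Z}, {X,Y,W}.\<close>
definition edge_data :: "region \<Rightarrow> region \<Rightarrow> region \<Rightarrow> region \<Rightarrow> bool" where
  "edge_data X Y Z W \<longleftrightarrow> {X, Y, Z} \<in> Verts \<and> {X, Y, W} \<in> Verts \<and> X \<noteq> Y \<and> Z \<noteq> W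
      \<and> Z \<notin> {X, Y} \<and> W \<notin> {X, Y}"

definition vadj :: "region set \<Rightarrow> region set \<Rightarrow> bool" where
  "vadj u v \<longleftrightarrow> u \<in> Verts \<and> v \<in> Verts \<and> u \<noteq> v \<and> card (u \<inter> v) = 2"

definition valid_coloring :: "(region \<Rightarrow> nat) \<Rightarrow> (region set \<Rightarrow> nat) \<Rightarrow> bool" where
  "valid_coloring CR CE \<longleftrightarrow>
     (\<forall>X\<in>Regions. CR X \<in> {1, 2, 3}) \<and> (\<forall>e\<in>Edges. CE e \<in> {1, 2, 3}) \<and>
     (\<forall>X Y Z W. edge_data X Y Z W \<longrightarrow>
         CE {X, Y} = CR Z \<and> CR Z = CR W \<and>
         CE {X, Y} \<noteq> CR X \<and> CE {X, Y} \<noteq> CR Y \<and> CR X \<noteq> CR Y)"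

definition mu_col :: "complex \<Rightarrow> complex \<Rightarrow> complex \<Rightarrow> nat \<Rightarrow> complex" where
  "mu_col p q r i = (if i = 1 then p else if i = 2 then q else r)"

definition markoff_map ::
  "(region \<Rightarrow> nat) \<Rightarrow> (region set \<Rightarrow> nat) \<Rightarrow> complex \<Rightarrow> complex \<Rightarrow> complex \<Rightarrow> complex
     \<Rightarrow> (region \<Rightarrow> complex) \<Rightarrow> bool" where
  "markoff_map CR CE p q r s \<phi> \<longleftrightarrow>
     (\<forall>X Y Z. {X, Y, Z} \<in> Verts \<and> CR X = 1 \<and> CR Y = 2 \<and> CR Z = 3 \<longrightarrow>
        (\<phi> X)\<^sup>2 + (\<phi> Y)\<^sup>2 + (\<phi> Z)\<^sup>2 + \<phi> X * \<phi> Y * \<phi> Z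
          = p * \<phi> X + q * \<phi> Y + r * \<phi> Z + s) \<and>
     (\<forall>X Y Z W. edge_data X Y Z W \<longrightarrow>
        \<phi> Z + \<phi> W = mu_col p q r (CE {X, Y}) - \<phi> X * \<phi> Y)"

text \<open>A directed edge is given by its tail vertex t and head vertex h (with vadj t h);
its underlying edge is t \<inter> h, so \<Omega>^0 = t \<inter> h.
\<Sigma>^- = vertices reachable from the tail without traversing the edge.\<close>

definition side_minus :: "region set \<Rightarrow> region set \<Rightarrow> region set set" where
  "side_minus t h = {v. (\<lambda>u w. vadj u w \<and> {u, w} \<noteq> {t, h})\<^sup>*\<^sup>* t v}"

text \<open>\<Omega>^-: regions whose boundary lies in \<Sigma>^- (all vertices on the boundary lie in \<Sigma>^-;
then also all boundary edges do, since the removed edge meets \<Sigma>^+ at h).\<close>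
definition Omega_minus :: "region set \<Rightarrow> region set \<Rightarrow> region set" where
  "Omega_minus t h = {Z \<in> Regions. \<forall>v\<in>Verts. Z \<in> v \<longrightarrow> v \<in> side_minus t h}"

definition Omega_0minus :: "region set \<Rightarrow> region set \<Rightarrow> region set" where
  "Omega_0minus t h = (t \<inter> h) \<union> Omega_minus t h"

definition dhead :: "region set \<Rightarrow> region \<Rightarrow> nat" where
  "dhead h Z = (LEAST n. \<exists>v\<in>Verts. Z \<in> v \<and> (vadj ^^ n) h v)"

inductive fib_rel :: "region set \<Rightarrow> region set \<Rightarrow> region \<Rightarrow> nat \<Rightarrow> bool"
  for t h where
  base: "Z \<in> t \<inter> h \<Longrightarrow> fib_rel t h Z 1"
| step: "\<lbrakk> Z \<in> Omega_minus t h; X \<in> Omega_0minus t h; Y \<in> Omega_0minus t h; X \<noteq> Y;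
           {X, Y, Z} \<in> Verts; dhead h X < dhead h Z; dhead h Y < dhead h Z;
           fib_rel t h X a; fib_rel t h Y b \<rbrakk> \<Longrightarrow> fib_rel t h Z (a + b)"

definition fib_dir :: "region set \<Rightarrow> region set \<Rightarrow> region \<Rightarrow> nat" where
  "fib_dir t h Z = (THE n. fib_rel t h Z n)"

definition fib_edge :: "region set \<Rightarrow> region set \<Rightarrow> region \<Rightarrow> nat" where
  "fib_edge t h X = (if X \<in> Omega_0minus t h then fib_dir t h X else fib_dir h t X)"

definition logplus :: "complex \<Rightarrow> real" where
  "logplus z = (if cmod z \<le> 1 then 0 else ln (cmod z))"

end

theory Submission
  imports Defs
begin


definition nrm :: "int \<times> int \<Rightarrow> int \<times> int" where
  "nrm v = (if snd v > 0 \<or> (snd v = 0 \<and> fst v > 0) then v else (- fst v, - snd v))"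

lemma coprime_det: "a*d - b*c = 1 \<or> a*d - b*c = -1 \<Longrightarrow> coprime a (b::int)"
proof -
  assume h: "a*d - b*c = 1 \<or> a*d - b*c = -1"
  have "gcd a b dvd a*d - b*c" by (simp add: dvd_diff)
  hence "gcd a b dvd 1" using h by (metis dvd_minus_iff)
  thus ?thesis by (metis is_unit_gcd)
qed

lemma Regions_iff: "(a,b) \<in> Regions \<longleftrightarrow> coprime a b \<and> (b > 0 \<or> (b = 0 \<and> a = 1))"
  by (simp add: Regions_def)

lemma nrm_Regions: assumes "coprime x (y::int)" shows "nrm (x,y) \<in> Regions"
proof -
  have "y = 0 \<Longrightarrow> \<bar>x\<bar> = 1" using assms by (simp add: zdvd1_eq)
  moreover have "coprime (-x) (-y)" using assms by simp
  ultimately show ?thesis using assms by (auto simp: nrm_def Regions_iff)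
qed

lemma Regions_nrm: "X \<in> Regions \<Longrightarrow> nrm X = X"
  by (cases X) (auto simp: nrm_def Regions_iff)

lemma Regions_nrm_neg: "X \<in> Regions \<Longrightarrow> nrm (- fst X, - snd X) = X"
  by (cases X) (auto simp: nrm_def Regions_iff)

lemma Regions_eq_nrm: "W \<in> Regions \<Longrightarrow> W = v \<or> W = (- fst v, - snd v) \<Longrightarrow> W = nrm v"
proof -
  assume W: "W \<in> Regions" and h: "W = v \<or> W = (- fst v, - snd v)"
  show ?thesis
  proof (cases "W = v")
    case True thus ?thesis using Regions_nrm W by simp
  next
    case False
    hence "v = (- fst W, - snd W)" using h by (cases v) auto
    thus ?thesis using Regions_nrm_neg W by simp
  qed
qed

lemma nrm_cases: "nrm v = v \<or> nrm v = (- fst v, - snd v)"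
  by (simp add: nrm_def)

lemma fdet_pair: "fdet (a,b) (c,d) = a*d - b*c" by (simp add: fdet_def)

lemma fdet_nrm_r: "\<bar>fdet X (nrm v)\<bar> = \<bar>fdet X v\<bar>"
  using nrm_cases[of v] by (cases X; cases v) (auto simp: fdet_def algebra_simps)

lemma fdet_nrm_l: "\<bar>fdet (nrm v) X\<bar> = \<bar>fdet v X\<bar>"
  using nrm_cases[of v] by (cases X; cases v) (auto simp: fdet_def algebra_simps)

lemma fdet_swap: "fdet X Y = - fdet Y X" by (simp add: fdet_def)

lemma fadj_sym: "fadj X Y \<Longrightarrow> fadj Y X"
  by (auto simp: fadj_def abs_minus_commute fdet_swap[of Y X])

lemma fadj_irrefl: "\<not> fadj X X" by (simp add: fadj_def fdet_def)

lemma fadj_Regions: "fadj X Y \<Longrightarrow> X \<in> Regions" "fadj X Y \<Longrightarrow> Y \<in> Regions"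
  by (auto simp: fadj_def)

lemma fadj_neq: "fadj X Y \<Longrightarrow> X \<noteq> Y" using fadj_irrefl by blast

lemma nbr_exists: assumes "X \<in> Regions" shows "\<exists>Y. fadj X Y"
proof -
  obtain a b where X: "X = (a,b)" by (cases X)
  have "coprime a b" using assms X by (simp add: Regions_iff)
  then obtain u v where uv: "u*a + v*b = 1" using bezout_int[of a b] by (auto simp: coprime_iff_gcd_eq_1)
  have cp: "coprime (-v) u" by (rule coprime_det[where d="-b" and c="-a"]) (use uv in algebra)
  have "\<bar>fdet X (nrm (-v,u))\<bar> = 1" unfolding fdet_nrm_r using uv X by (simp add: fdet_def algebra_simps)
  thus ?thesis using nrm_Regions[OF cp] assms unfolding fadj_def by blast
qed

lemma common_nbr:
  assumes "fadj X Y" "fadj X W" "fadj Y W"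
  shows "W = nrm (fst X + fst Y, snd X + snd Y) \<or> W = nrm (fst X - fst Y, snd X - snd Y)"
proof -
  obtain a b c d e f where X: "X = (a,b)" and Y: "Y = (c,d)" and W: "W = (e,f)"
    by (cases X; cases Y; cases W) auto
  define D where "D = a*d - b*c"
  define P where "P = e*d - f*c"
  define Q where "Q = a*f - b*e"
  have D: "D = 1 \<or> D = -1" using assms(1) X Y by (auto simp: fadj_def fdet_def D_def)
  have P: "P = 1 \<or> P = -1" using assms(3) Y W fadj_sym[OF assms(3)] by (auto simp: fadj_def fdet_def P_def)
  have Q: "Q = 1 \<or> Q = -1" using assms(2) X W by (auto simp: fadj_def fdet_def Q_def)
  have i1: "D * e = P*a + Q*c" unfolding D_def P_def Q_def by algebra
  have i2: "D * f = P*b + Q*d" unfolding D_def P_def Q_def by algebra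
  have WR: "W \<in> Regions" using assms(2) by (simp add: fadj_Regions)
  have "W = (a+c, b+d) \<or> W = (-(a+c), -(b+d)) \<or> W = (a-c, b-d) \<or> W = (-(a-c), -(b-d))"
    using D P Q i1 i2 W by auto
  thus ?thesis using Regions_eq_nrm[OF WR] X Y by auto
qed

lemma nrm_sum_adj:
  assumes "fadj X Y"
  shows "fadj X (nrm (fst X + fst Y, snd X + snd Y))" "fadj Y (nrm (fst X + fst Y, snd X + snd Y))"
    "fadj X (nrm (fst X - fst Y, snd X - snd Y))" "fadj Y (nrm (fst X - fst Y, snd X - snd Y))"
    "nrm (fst X + fst Y, snd X + snd Y) \<noteq> nrm (fst X - fst Y, snd X - snd Y)"
proof -
  obtain a b c d where X: "X = (a,b)" and Y: "Y = (c,d)" by (cases X; cases Y) auto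
  have D: "a*d - b*c = 1 \<or> a*d - b*c = -1" using assms X Y by (auto simp: fadj_def fdet_def)
  have c1: "coprime (a+c) (b+d)" by (rule coprime_det[where d="-b" and c="-a"]) (use D in algebra)
  have c2: "coprime (a-c) (b-d)" by (rule coprime_det[where d="b" and c="a"]) (use D in algebra)
  have R1: "nrm (a+c,b+d) \<in> Regions" using nrm_Regions[OF c1] .
  have R2: "nrm (a-c,b-d) \<in> Regions" using nrm_Regions[OF c2] .
  have XR: "X \<in> Regions" "Y \<in> Regions" using assms fadj_Regions by auto
  show "fadj X (nrm (fst X + fst Y, snd X + snd Y))"
    using R1 XR D X Y unfolding fadj_def fdet_nrm_r by (auto simp: fdet_def algebra_simps)
  show "fadj Y (nrm (fst X + fst Y, snd X + snd Y))"
    using R1 XR D X Y unfolding fadj_def fdet_nrm_r by (auto simp: fdet_def algebra_simps)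
  show "fadj X (nrm (fst X - fst Y, snd X - snd Y))"
    using R2 XR D X Y unfolding fadj_def fdet_nrm_r by (auto simp: fdet_def algebra_simps)
  show "fadj Y (nrm (fst X - fst Y, snd X - snd Y))"
    using R2 XR D X Y unfolding fadj_def fdet_nrm_r by (auto simp: fdet_def algebra_simps)
  show "nrm (fst X + fst Y, snd X + snd Y) \<noteq> nrm (fst X - fst Y, snd X - snd Y)"
  proof
    assume "nrm (fst X + fst Y, snd X + snd Y) = nrm (fst X - fst Y, snd X - snd Y)"
    hence "(a+c,b+d) = (a-c,b-d) \<or> (a+c,b+d) = (-(a-c),-(b-d))"
      using X Y nrm_cases[of "(a+c,b+d)"] nrm_cases[of "(a-c,b-d)"] by (auto simp: nrm_def split: if_splits)
    thus False using D by auto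
  qed
qed

lemma Verts_iff: "v \<in> Verts \<longleftrightarrow> (\<exists>X Y Z. v = {X,Y,Z} \<and> fadj X Y \<and> fadj Y Z \<and> fadj X Z)"
  by (auto simp: Verts_def)

lemma Verts_adj: "v \<in> Verts \<Longrightarrow> P \<in> v \<Longrightarrow> Q \<in> v \<Longrightarrow> P \<noteq> Q \<Longrightarrow> fadj P Q"
  by (auto simp: Verts_iff dest: fadj_sym)

lemma Verts_Regions: "v \<in> Verts \<Longrightarrow> v \<subseteq> Regions"
  by (auto simp: Verts_iff dest: fadj_Regions)

lemma Verts_card: "v \<in> Verts \<Longrightarrow> card v = 3 \<and> finite v"
proof -
  assume "v \<in> Verts"
  then obtain X Y Z where v: "v = {X,Y,Z}" "fadj X Y" "fadj Y Z" "fadj X Z" unfolding Verts_iff by blast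
  have "X \<noteq> Y" "Y \<noteq> Z" "X \<noteq> Z" using v fadj_neq by auto
  thus ?thesis using v(1) by simp
qed

lemma Verts_insert: "fadj X Y \<Longrightarrow> fadj Y Z \<Longrightarrow> fadj X Z \<Longrightarrow> {X,Y,Z} \<in> Verts"
  unfolding Verts_iff by blast

lemma vadj_struct:
  assumes "vadj u w"
  shows "\<exists>P Q Z W. u = {P,Q,Z} \<and> w = {P,Q,W} \<and> fadj P Q \<and> fadj P Z \<and> fadj Q Z
     \<and> fadj P W \<and> fadj Q W \<and> Z \<noteq> W"
proof -
  have u: "u \<in> Verts" and w: "w \<in> Verts" and ne: "u \<noteq> w" and c2: "card (u \<inter> w) = 2"
    using assms by (auto simp: vadj_def)
  obtain P Q where PQ: "u \<inter> w = {P,Q}" "P \<noteq> Q" using c2 by (auto simp: card_2_iff)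
  have cu: "card u = 3" "finite u" and cw: "card w = 3" "finite w" using Verts_card u w by auto
  have "card (u - {P,Q}) = 1"
  proof -
    have "u - {P,Q} = u - (u \<inter> w)" using PQ by simp
    thus ?thesis using cu c2 by (simp add: card_Diff_subset_Int)
  qed
  then obtain Z where Z: "u - {P,Q} = {Z}" by (auto simp: card_1_singleton_iff)
  have "card (w - {P,Q}) = 1"
  proof -
    have "w - {P,Q} = w - (w \<inter> u)" using PQ by auto
    moreover have "card (w \<inter> u) = 2" using c2 by (simp add: Int_commute)
    ultimately show ?thesis using cw by (simp add: card_Diff_subset_Int)
  qed
  then obtain W where W: "w - {P,Q} = {W}" by (auto simp: card_1_singleton_iff)
  have ueq: "u = {P,Q,Z}" using Z PQ by blast
  have weq: "w = {P,Q,W}" using W PQ by blast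
  have "Z \<notin> {P,Q}" "W \<notin> {P,Q}" using Z W by auto
  hence "Z \<noteq> W" using ne ueq weq by auto
  moreover have "fadj P Q" "fadj P Z" "fadj Q Z" "fadj P W" "fadj Q W"
    using Verts_adj[OF u, of P Q] Verts_adj[OF u, of P Z] Verts_adj[OF u, of Q Z]
      Verts_adj[OF w, of P W] Verts_adj[OF w, of Q W]
      ueq weq PQ \<open>Z \<notin> {P,Q}\<close> \<open>W \<notin> {P,Q}\<close> by (simp_all, (metis)+)
  ultimately show ?thesis using ueq weq by blast
qed



definition aut :: "(region \<Rightarrow> region) \<Rightarrow> (region \<Rightarrow> region) \<Rightarrow> bool" where
  "aut g g' \<longleftrightarrow> (\<forall>X\<in>Regions. g X \<in> Regions \<and> g' X \<in> Regions \<and> g' (g X) = X \<and> g (g' X) = X)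
     \<and> (\<forall>X\<in>Regions. \<forall>Y\<in>Regions. fadj (g X) (g Y) = fadj X Y \<and> fadj (g' X) (g' Y) = fadj X Y)"

lemma aut_sym: "aut g g' \<Longrightarrow> aut g' g" by (auto simp: aut_def)

lemma aut_Reg: "aut g g' \<Longrightarrow> X \<in> Regions \<Longrightarrow> g X \<in> Regions" by (auto simp: aut_def)
lemma aut_inv: "aut g g' \<Longrightarrow> X \<in> Regions \<Longrightarrow> g' (g X) = X" by (auto simp: aut_def)

lemma aut_fadj: "aut g g' \<Longrightarrow> fadj X Y \<Longrightarrow> fadj (g X) (g Y)"
  using fadj_Regions[of X Y] unfolding aut_def by blast

lemma aut_inj: "aut g g' \<Longrightarrow> inj_on g Regions"
  by (rule inj_on_inverseI[where g=g']) (rule aut_inv)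

lemma aut_img_inv: "aut g g' \<Longrightarrow> u \<subseteq> Regions \<Longrightarrow> g' ` (g ` u) = u"
proof -
  assume a: "aut g g'" and u: "u \<subseteq> Regions"
  have "g' ` (g ` u) = (\<lambda>x. g' (g x)) ` u" by (simp add: image_image)
  also have "\<dots> = id ` u" using aut_inv[OF a] u by (intro image_cong) auto
  finally show ?thesis by simp
qed

lemma aut_Verts: "aut g g' \<Longrightarrow> v \<in> Verts \<Longrightarrow> g ` v \<in> Verts"
proof -
  assume a: "aut g g'" and "v \<in> Verts"
  then obtain X Y Z where v: "v = {X,Y,Z}" "fadj X Y" "fadj Y Z" "fadj X Z" unfolding Verts_iff by blast
  have "g ` v = {g X, g Y, g Z}" using v by simp
  thus ?thesis using aut_fadj[OF a] v Verts_insert by metis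
qed

lemma aut_img_eq: "aut g g' \<Longrightarrow> u \<subseteq> Regions \<Longrightarrow> w \<subseteq> Regions \<Longrightarrow> g ` u = g ` w \<Longrightarrow> u = w"
  by (metis aut_img_inv)

lemma aut_vadj: "aut g g' \<Longrightarrow> vadj u w \<Longrightarrow> vadj (g ` u) (g ` w)"
proof -
  assume a: "aut g g'" and vw: "vadj u w"
  have u: "u \<in> Verts" and w: "w \<in> Verts" and ne: "u \<noteq> w" and c: "card (u \<inter> w) = 2"
    using vw by (auto simp: vadj_def)
  have uR: "u \<subseteq> Regions" and wR: "w \<subseteq> Regions" using Verts_Regions u w by auto
  have inj: "inj_on g Regions" using aut_inj[OF a] .
  have "g ` (u \<inter> w) = g ` u \<inter> g ` w" using inj uR wR by (simp add: inj_on_image_Int)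
  moreover have "card (g ` (u \<inter> w)) = card (u \<inter> w)"
    using inj uR by (meson card_image inj_on_subset le_infI1)
  ultimately have "card (g ` u \<inter> g ` w) = 2" using c by simp
  moreover have "g ` u \<noteq> g ` w" using aut_img_eq[OF a uR wR] ne by blast
  ultimately show ?thesis using aut_Verts[OF a u] aut_Verts[OF a w] by (simp add: vadj_def)
qed

lemma aut_relpow: "aut g g' \<Longrightarrow> (vadj ^^ n) u w \<Longrightarrow> (vadj ^^ n) (g ` u) (g ` w)"
proof (induction n arbitrary: w)
  case 0 thus ?case by simp
next
  case (Suc n)
  from Suc.prems(2) obtain y where "(vadj ^^ n) u y" "vadj y w" by (auto elim: relpowp_Suc_E)
  thus ?case using Suc.IH[OF Suc.prems(1)] aut_vadj[OF Suc.prems(1)] by (meson relpowp_Suc_I)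
qed

lemma aut_side_minus:
  assumes a: "aut g g'" and th: "vadj t h" and v: "v \<in> side_minus t h"
  shows "g ` v \<in> side_minus (g ` t) (g ` h)"
proof -
  have tR: "t \<subseteq> Regions" "h \<subseteq> Regions" using th Verts_Regions by (auto simp: vadj_def)
  have "(\<lambda>u w. vadj u w \<and> {u, w} \<noteq> {t, h})\<^sup>*\<^sup>* t v" using v by (simp add: side_minus_def)
  hence "(\<lambda>u w. vadj u w \<and> {u, w} \<noteq> {g ` t, g ` h})\<^sup>*\<^sup>* (g ` t) (g ` v)"
  proof (induction rule: rtranclp_induct)
    case base thus ?case by simp
  next
    case (step y z)
    have yz: "vadj y z" "{y, z} \<noteq> {t, h}" using step.hyps(2) by auto
    have yR: "y \<subseteq> Regions" "z \<subseteq> Regions" using yz(1) Verts_Regions by (auto simp: vadj_def)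
    have "{g ` y, g ` z} \<noteq> {g ` t, g ` h}"
    proof
      assume "{g ` y, g ` z} = {g ` t, g ` h}"
      hence "(g ` y = g ` t \<and> g ` z = g ` h) \<or> (g ` y = g ` h \<and> g ` z = g ` t)" by (simp add: doubleton_eq_iff)
      hence "(y = t \<and> z = h) \<or> (y = h \<and> z = t)" using aut_img_eq[OF a] yR tR by metis
      thus False using yz(2) by auto
    qed
    thus ?case using step.IH aut_vadj[OF a yz(1)] by (simp add: rtranclp.rtrancl_into_rtrancl)
  qed
  thus ?thesis by (simp add: side_minus_def)
qed

lemma Omega_minus_Regions: "Omega_minus t h \<subseteq> Regions" by (auto simp: Omega_minus_def)

lemma Omega_0minus_Regions: "vadj t h \<Longrightarrow> Omega_0minus t h \<subseteq> Regions"
  using Verts_Regions Omega_minus_Regions by (auto simp: vadj_def Omega_0minus_def)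

lemma aut_Omega_minus:
  assumes a: "aut g g'" and th: "vadj t h" and Z: "Z \<in> Omega_minus t h"
  shows "g Z \<in> Omega_minus (g ` t) (g ` h)"
proof -
  have ZR: "Z \<in> Regions" and Zv: "\<forall>v\<in>Verts. Z \<in> v \<longrightarrow> v \<in> side_minus t h" using Z by (auto simp: Omega_minus_def)
  have a': "aut g' g" using aut_sym[OF a] .
  have "\<forall>v'\<in>Verts. g Z \<in> v' \<longrightarrow> v' \<in> side_minus (g ` t) (g ` h)"
  proof (intro ballI impI)
    fix v' assume v': "v' \<in> Verts" "g Z \<in> v'"
    have vR: "v' \<subseteq> Regions" using Verts_Regions v'(1) by auto
    have "g' ` v' \<in> Verts" using aut_Verts[OF a' v'(1)] .
    moreover have "Z \<in> g' ` v'" using v'(2) aut_inv[OF a ZR] by (metis rev_image_eqI)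
    ultimately have "g' ` v' \<in> side_minus t h" using Zv by blast
    hence "g ` (g' ` v') \<in> side_minus (g ` t) (g ` h)" using aut_side_minus[OF a th] by blast
    thus "v' \<in> side_minus (g ` t) (g ` h)" using aut_img_inv[OF a' vR] by simp
  qed
  thus ?thesis using aut_Reg[OF a ZR] by (simp add: Omega_minus_def)
qed

lemma aut_Omega_0minus:
  assumes a: "aut g g'" and th: "vadj t h" and Z: "Z \<in> Omega_0minus t h"
  shows "g Z \<in> Omega_0minus (g ` t) (g ` h)"
proof (cases "Z \<in> t \<inter> h")
  case True thus ?thesis unfolding Omega_0minus_def by blast
next
  case False thus ?thesis using Z aut_Omega_minus[OF a th] unfolding Omega_0minus_def by blast
qed

lemma aut_dhead:
  assumes a: "aut g g'" and h: "h \<in> Verts" and Z: "Z \<in> Regions"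
  shows "dhead (g ` h) (g Z) = dhead h Z"
proof -
  have a': "aut g' g" using aut_sym[OF a] .
  have hR: "h \<subseteq> Regions" using Verts_Regions h by auto
  have eq: "(\<exists>v\<in>Verts. g Z \<in> v \<and> (vadj ^^ n) (g ` h) v) = (\<exists>v\<in>Verts. Z \<in> v \<and> (vadj ^^ n) h v)" for n
  proof (rule iffI)
    assume "\<exists>v\<in>Verts. g Z \<in> v \<and> (vadj ^^ n) (g ` h) v"
    then obtain v where v: "v \<in> Verts" "g Z \<in> v" "(vadj ^^ n) (g ` h) v" by blast
    have "(vadj ^^ n) (g' ` (g ` h)) (g' ` v)" using aut_relpow[OF a' v(3)] .
    hence "(vadj ^^ n) h (g' ` v)" using aut_img_inv[OF a hR] by simp
    moreover have "Z \<in> g' ` v" using v(2) aut_inv[OF a Z] by (metis rev_image_eqI)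
    ultimately show "\<exists>v\<in>Verts. Z \<in> v \<and> (vadj ^^ n) h v" using aut_Verts[OF a' v(1)] by blast
  next
    assume "\<exists>v\<in>Verts. Z \<in> v \<and> (vadj ^^ n) h v"
    then obtain v where v: "v \<in> Verts" "Z \<in> v" "(vadj ^^ n) h v" by blast
    thus "\<exists>v\<in>Verts. g Z \<in> v \<and> (vadj ^^ n) (g ` h) v"
      using aut_relpow[OF a v(3)] aut_Verts[OF a v(1)] by blast
  qed
  show ?thesis unfolding dhead_def eq ..
qed

lemma aut_fib_rel:
  assumes a: "aut g g'" and th: "vadj t h" and f: "fib_rel t h Z n"
  shows "fib_rel (g ` t) (g ` h) (g Z) n"
  using f
proof (induction rule: fib_rel.induct)
  case (base Z) thus ?case by (intro fib_rel.base) auto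
next
  case (step Z X Y a b)
  have hV: "h \<in> Verts" using th by (simp add: vadj_def)
  have R: "X \<in> Regions" "Y \<in> Regions" "Z \<in> Regions"
    using step.hyps(1-3) Omega_0minus_Regions[OF th] Omega_minus_Regions by auto
  have "g X \<noteq> g Y" using step.hyps(4) aut_inv[OF a] R by metis
  moreover have "{g X, g Y, g Z} \<in> Verts" using aut_Verts[OF a step.hyps(5)] by simp
  moreover have "dhead (g ` h) (g X) < dhead (g ` h) (g Z)" "dhead (g ` h) (g Y) < dhead (g ` h) (g Z)"
    using step.hyps(6,7) aut_dhead[OF a hV] R by simp_all
  ultimately show ?case
    using step.IH aut_Omega_minus[OF a th step.hyps(1)] aut_Omega_0minus[OF a th step.hyps(2)]
      aut_Omega_0minus[OF a th step.hyps(3)]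
    by (intro fib_rel.step) 
qed

lemma aut_fib_rel_iff:
  assumes a: "aut g g'" and th: "vadj t h" and Z: "Z \<in> Regions"
  shows "fib_rel (g ` t) (g ` h) (g Z) n \<longleftrightarrow> fib_rel t h Z n"
proof
  assume f: "fib_rel (g ` t) (g ` h) (g Z) n"
  have th': "vadj (g ` t) (g ` h)" using aut_vadj[OF a th] .
  have tR: "t \<subseteq> Regions" "h \<subseteq> Regions" using th Verts_Regions by (auto simp: vadj_def)
  have "fib_rel (g' ` (g ` t)) (g' ` (g ` h)) (g' (g Z)) n" using aut_fib_rel[OF aut_sym[OF a] th' f] .
  thus "fib_rel t h Z n" using aut_img_inv[OF a] tR aut_inv[OF a Z] by simp
qed (rule aut_fib_rel[OF a th])

lemma aut_Omega_0minus_iff: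
  assumes a: "aut g g'" and th: "vadj t h" and Z: "Z \<in> Regions"
  shows "g Z \<in> Omega_0minus (g ` t) (g ` h) \<longleftrightarrow> Z \<in> Omega_0minus t h"
proof
  assume f: "g Z \<in> Omega_0minus (g ` t) (g ` h)"
  have th': "vadj (g ` t) (g ` h)" using aut_vadj[OF a th] .
  have tR: "t \<subseteq> Regions" "h \<subseteq> Regions" using th Verts_Regions by (auto simp: vadj_def)
  have "g' (g Z) \<in> Omega_0minus (g' ` (g ` t)) (g' ` (g ` h))" using aut_Omega_0minus[OF aut_sym[OF a] th' f] .
  thus "Z \<in> Omega_0minus t h" using aut_img_inv[OF a] tR aut_inv[OF a Z] by simp
qed (rule aut_Omega_0minus[OF a th])



definition lin :: "int \<Rightarrow> int \<Rightarrow> int \<Rightarrow> int \<Rightarrow> region \<Rightarrow> region" where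
  "lin p q r s X = nrm (p * fst X + q * snd X, r * fst X + s * snd X)"

lemma nrm_negv: "nrm (- fst w, - snd w) = nrm w"
  by (cases w) (auto simp: nrm_def)

lemma lin_nrm: "lin p q r s (nrm v) = lin p q r s v"
proof (cases "nrm v = v")
  case True thus ?thesis by simp
next
  case False
  hence "nrm v = (- fst v, - snd v)" using nrm_cases[of v] by auto
  thus ?thesis unfolding lin_def using nrm_negv[of "(p * fst v + q * snd v, r * fst v + s * snd v)"]
    by (simp add: algebra_simps)
qed

lemma lin_det: "\<bar>fdet (lin p q r s X) (lin p q r s Y)\<bar> = \<bar>p*s - q*r\<bar> * \<bar>fdet X Y\<bar>"
  unfolding lin_def fdet_nrm_l fdet_nrm_r
  by (cases X; cases Y) (simp add: fdet_def abs_mult[symmetric] algebra_simps)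

lemma lin_Reg: assumes d: "\<bar>p*s - q*r\<bar> = 1" and X: "X \<in> Regions" shows "lin p q r s X \<in> Regions"
proof -
  obtain Y where XY: "fadj X Y" using nbr_exists[OF X] by blast
  obtain a b c e where ab: "X = (a,b)" "Y = (c,e)" by (cases X; cases Y) auto
  have "\<bar>a*e - b*c\<bar> = 1" using XY ab by (simp add: fadj_def fdet_def)
  hence "\<bar>(p*a + q*b)*(r*c + s*e) - (r*a + s*b)*(p*c+q*e)\<bar> = 1"
  proof -
    have "(p*a + q*b)*(r*c + s*e) - (r*a + s*b)*(p*c+q*e) = (p*s - q*r) * (a*e - b*c)" by algebra
    thus ?thesis using d \<open>\<bar>a*e - b*c\<bar> = 1\<close> by (simp add: abs_mult)
  qed
  hence "coprime (p*a + q*b) (r*a + s*b)" by (intro coprime_det[where d="r*c + s*e" and c="p*c+q*e"]) arith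
  thus ?thesis using ab by (simp add: lin_def nrm_Regions)
qed

lemma lin_inv: assumes d: "\<delta> = p*s - q*r" "\<bar>\<delta>\<bar> = 1" and X: "X \<in> Regions"
  shows "lin (\<delta>*s) (-\<delta>*q) (-\<delta>*r) (\<delta>*p) (lin p q r s X) = X"
proof -
  obtain a b where ab: "X = (a,b)" by (cases X)
  have dd: "\<delta> * \<delta> = 1" using d(2) by (cases "\<delta> \<ge> 0") auto
  have e1: "\<delta>*s*(p*a+q*b) + -\<delta>*q*(r*a+s*b) = \<delta>*\<delta>*a" using d(1) by algebra
  have e2: "-\<delta>*r*(p*a+q*b) + \<delta>*p*(r*a+s*b) = \<delta>*\<delta>*b" using d(1) by algebra
  have "lin (\<delta>*s) (-\<delta>*q) (-\<delta>*r) (\<delta>*p) (lin p q r s X) = lin (\<delta>*s) (-\<delta>*q) (-\<delta>*r) (\<delta>*p) (p*a+q*b, r*a+s*b)"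
    unfolding lin_def[of p q r s] lin_nrm using ab by simp
  also have "\<dots> = nrm (a, b)" unfolding lin_def using e1 e2 dd by simp
  also have "\<dots> = X" using Regions_nrm X ab by simp
  finally show ?thesis .
qed

lemma lin_aut: assumes d: "\<delta> = p*s - q*r" "\<bar>\<delta>\<bar> = 1"
  shows "aut (lin p q r s) (lin (\<delta>*s) (-\<delta>*q) (-\<delta>*r) (\<delta>*p))"
proof -
  have dd: "\<delta> * \<delta> = 1" using d(2) by (cases "\<delta> \<ge> 0") auto
  have d2: "(\<delta>*s)*(\<delta>*p) - (-\<delta>*q)*(-\<delta>*r) = \<delta>" using d(1) dd by algebra
  have d2': "\<bar>(\<delta>*s)*(\<delta>*p) - (-\<delta>*q)*(-\<delta>*r)\<bar> = 1" using d2 d(2) by simp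
  have inv2: "lin p q r s (lin (\<delta>*s) (-\<delta>*q) (-\<delta>*r) (\<delta>*p) X) = X" if "X \<in> Regions" for X
  proof -
    have "lin (\<delta>*(\<delta>*p)) (-\<delta>*(-\<delta>*q)) (-\<delta>*(-\<delta>*r)) (\<delta>*(\<delta>*s)) (lin (\<delta>*s) (-\<delta>*q) (-\<delta>*r) (\<delta>*p) X) = X"
      using lin_inv[OF d2[symmetric] d(2) that] .
    moreover have eqs: "\<delta>*(\<delta>*p) = p" "-\<delta>*(-\<delta>*q) = q" "-\<delta>*(-\<delta>*r) = r" "\<delta>*(\<delta>*s) = s"
      using dd by (metis mult.assoc mult_1 mult_minus_left minus_mult_minus)+
    ultimately show ?thesis by (simp only: eqs)
  qed
  have det1: "\<bar>fdet (lin p q r s X) (lin p q r s Y)\<bar> = \<bar>fdet X Y\<bar>" for X Y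
    using lin_det[of p q r s X Y] d by simp
  have det2: "\<bar>fdet (lin (\<delta>*s) (-\<delta>*q) (-\<delta>*r) (\<delta>*p) X) (lin (\<delta>*s) (-\<delta>*q) (-\<delta>*r) (\<delta>*p) Y)\<bar> = \<bar>fdet X Y\<bar>" for X Y
    using lin_det[of "\<delta>*s" "-\<delta>*q" "-\<delta>*r" "\<delta>*p" X Y] d2' by simp
  have R1: "lin p q r s X \<in> Regions" if "X \<in> Regions" for X using lin_Reg[of p s q r X] d that by simp
  have R2: "lin (\<delta>*s) (-\<delta>*q) (-\<delta>*r) (\<delta>*p) X \<in> Regions" if "X \<in> Regions" for X
    using lin_Reg[OF d2' that] .
  show ?thesis unfolding aut_def
  proof (intro conjI ballI)
    fix X Y assume X: "X \<in> Regions" and Y: "Y \<in> Regions"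
    show "fadj (lin p q r s X) (lin p q r s Y) = fadj X Y"
      unfolding fadj_def using det1[of X Y] R1[OF X] R1[OF Y] X Y by simp
    show "fadj (lin (\<delta>*s) (-\<delta>*q) (-\<delta>*r) (\<delta>*p) X) (lin (\<delta>*s) (-\<delta>*q) (-\<delta>*r) (\<delta>*p) Y) = fadj X Y"
      unfolding fadj_def using det2[of X Y] R2[OF X] R2[OF Y] X Y by simp
  next
    fix X assume X: "X \<in> Regions"
    show "lin p q r s X \<in> Regions" using R1[OF X] .
    show "lin (\<delta>*s) (-\<delta>*q) (-\<delta>*r) (\<delta>*p) X \<in> Regions" using R2[OF X] .
    show "lin (\<delta>*s) (-\<delta>*q) (-\<delta>*r) (\<delta>*p) (lin p q r s X) = X" using lin_inv[OF d X] .
    show "lin p q r s (lin (\<delta>*s) (-\<delta>*q) (-\<delta>*r) (\<delta>*p) X) = X" using inv2[OF X] .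
  qed
qed

definition t0 :: "region set" where "t0 = {(1,0),(0,1),(1,1)}"
definition h0 :: "region set" where "h0 = {(1,0),(0,1),(-1,1)}"

lemma std_reduction:
  assumes "vadj t h"
  shows "\<exists>g g'. aut g g' \<and> g ` t = t0 \<and> g ` h = h0"
proof -
  obtain P Q Z W where s: "t = {P,Q,Z}" "h = {P,Q,W}" "fadj P Q" "fadj P Z" "fadj Q Z"
     "fadj P W" "fadj Q W" "Z \<noteq> W" using vadj_struct[OF assms] by blast
  obtain a b c d where PQ: "P = (a,b)" "Q = (c,d)" by (cases P; cases Q) auto
  define \<sigma> where "\<sigma> = a*d - b*c"
  have \<sigma>: "\<sigma> = 1 \<or> \<sigma> = -1" using s(3) PQ by (auto simp: fadj_def fdet_def \<sigma>_def)
  have Z: "Z = nrm (a+c, b+d) \<or> Z = nrm (a-c, b-d)" using common_nbr[OF s(3,4,5)] PQ by simp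
  have W: "W = nrm (a+c, b+d) \<or> W = nrm (a-c, b-d)" using common_nbr[OF s(3,6,7)] PQ by simp
  obtain \<tau> where \<tau>: "\<tau> = 1 \<or> \<tau> = -1" and ZW: "Z = nrm (a+\<tau>*c, b+\<tau>*d)" "W = nrm (a-\<tau>*c, b-\<tau>*d)"
  proof (cases "Z = nrm (a+c, b+d)")
    case True
    hence "W = nrm (a-c, b-d)" using W s(8) by auto
    thus ?thesis using that[of 1] True by simp
  next
    case False
    hence "Z = nrm (a-c, b-d)" "W = nrm (a+c, b+d)" using Z W s(8) by auto
    thus ?thesis using that[of "-1"] by simp
  qed
  define g where "g = lin (\<sigma>*d) (-\<sigma>*c) (-\<tau>*\<sigma>*b) (\<tau>*\<sigma>*a)"
  define \<delta> where "\<delta> = (\<sigma>*d)*(\<tau>*\<sigma>*a) - (-\<sigma>*c)*(-\<tau>*\<sigma>*b)"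
  have \<delta>: "\<delta> = \<tau>*\<sigma>*\<sigma>*\<sigma>" unfolding \<delta>_def \<sigma>_def by algebra
  have \<delta>1: "\<bar>\<delta>\<bar> = 1" using \<delta> \<sigma> \<tau> by auto
  have ss: "\<sigma>*\<sigma> = 1" "\<tau>*\<tau> = 1" using \<sigma> \<tau> by auto
  have gP: "g P = (1,0)"
  proof -
    have "\<sigma>*d*a + -\<sigma>*c*b = \<sigma>*\<sigma>" "-\<tau>*\<sigma>*b*a + \<tau>*\<sigma>*a*b = 0" unfolding \<sigma>_def by algebra+
    thus ?thesis using ss PQ by (simp add: g_def lin_def nrm_def)
  qed
  have gQ: "g Q = (0,1)"
  proof -
    have "\<sigma>*d*c + -\<sigma>*c*d = 0" "-\<tau>*\<sigma>*b*c + \<tau>*\<sigma>*a*d = \<tau>*\<sigma>*\<sigma>" unfolding \<sigma>_def by algebra+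
    thus ?thesis using ss PQ \<tau> by (auto simp: g_def lin_def nrm_def)
  qed
  have gZ: "g Z = (1,1)"
  proof -
    have "\<sigma>*d*(a+\<tau>*c) + -\<sigma>*c*(b+\<tau>*d) = \<sigma>*\<sigma>" "-\<tau>*\<sigma>*b*(a+\<tau>*c) + \<tau>*\<sigma>*a*(b+\<tau>*d) = \<tau>*\<tau>*\<sigma>*\<sigma>"
      unfolding \<sigma>_def by algebra+
    thus ?thesis using ss unfolding ZW(1) g_def lin_nrm by (simp add: lin_def nrm_def)
  qed
  have gW: "g W = (-1,1)"
  proof -
    have "\<sigma>*d*(a-\<tau>*c) + -\<sigma>*c*(b-\<tau>*d) = \<sigma>*\<sigma>" "-\<tau>*\<sigma>*b*(a-\<tau>*c) + \<tau>*\<sigma>*a*(b-\<tau>*d) = -\<tau>*\<tau>*\<sigma>*\<sigma>"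
      unfolding \<sigma>_def by algebra+
    thus ?thesis using ss unfolding ZW(2) g_def lin_nrm by (simp add: lin_def nrm_def)
  qed
  have "aut g (lin (\<delta>*(\<tau>*\<sigma>*a)) (-\<delta>*(-\<sigma>*c)) (-\<delta>*(-\<tau>*\<sigma>*b)) (\<delta>*(\<sigma>*d)))"
    unfolding g_def by (rule lin_aut[OF \<delta>_def \<delta>1])
  moreover have "g ` t = t0" "g ` h = h0" using s(1,2) gP gQ gZ gW by (auto simp: t0_def h0_def)
  ultimately show ?thesis by blast
qed

definition rho :: "region \<Rightarrow> region" where "rho = lin (-1) 0 0 1"

lemma rho_aut: "aut rho rho"
proof -
  have "aut (lin (-1) 0 0 1) (lin ((-1)*1) (-(-1)*0) (-(-1)*0) ((-1)*(-1)))"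
    by (rule lin_aut[where \<delta>="-1"]) simp_all
  thus ?thesis by (simp add: rho_def)
qed

lemma rho_vals: "rho (1,0) = (1,0)" "rho (0,1) = (0,1)" "rho (1,1) = (-1,1)" "rho (-1,1) = (1,1)"
  by (simp_all add: rho_def lin_def nrm_def)

lemma rho_t0: "rho ` t0 = h0" and rho_h0: "rho ` h0 = t0"
  by (simp_all add: rho_vals t0_def h0_def insert_commute)



function E :: "nat \<Rightarrow> nat \<Rightarrow> nat" where
  "E a b = (if a = 0 \<or> b = 0 then 0 else if b \<le> a then Suc (E (a - b) b) else Suc (E a (b - a)))"
  by pat_completeness auto
termination by (relation "measure (\<lambda>(a,b). a + b)") auto

declare E.simps[simp del]

lemma E0: "E a 0 = 0" "E 0 b = 0" by (subst E.simps; simp)+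

lemma E_sub1: "b \<le> a \<Longrightarrow> 0 < b \<Longrightarrow> E a b = Suc (E (a - b) b)"
  by (subst E.simps) auto

lemma E_sub2: "a < b \<Longrightarrow> 0 < a \<Longrightarrow> E a b = Suc (E a (b - a))"
  by (subst E.simps) auto

lemma E_sym: "E a b = E b a"
proof (induction "a+b" arbitrary: a b rule: less_induct)
  case less
  show ?case
  proof (cases "a = 0 \<or> b = 0 \<or> a = b")
    case True thus ?thesis using E0 by auto
  next
    case False
    hence ne: "a \<noteq> 0" "b \<noteq> 0" "a \<noteq> b" by auto
    show ?thesis
    proof (cases "b < a")
      case True
      have "E a b = Suc (E (a - b) b)" using E_sub1[of b a] True ne by simp
      moreover have "E b a = Suc (E b (a - b))" using E_sub2[of b a] True ne by simp
      moreover have "E (a - b) b = E b (a - b)" using less.hyps[of "a-b" b] True ne by simp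
      ultimately show ?thesis by simp
    next
      case False
      hence T: "a < b" using ne by simp
      have "E a b = Suc (E a (b - a))" using E_sub2[of a b] T ne by simp
      moreover have "E b a = Suc (E (b - a) a)" using E_sub1[of a b] T ne by simp
      moreover have "E a (b - a) = E (b - a) a" using less.hyps[of a "b-a"] T ne by simp
      ultimately show ?thesis by simp
    qed
  qed
qed

definition H :: "nat \<Rightarrow> nat \<Rightarrow> nat \<Rightarrow> nat \<Rightarrow> bool" where
  "H a b c d \<longleftrightarrow> \<bar>int a * int d - int b * int c\<bar> = 1"

lemma H_swap: "H a b c d \<Longrightarrow> H b a d c"
  by (simp add: H_def abs_minus_commute mult.commute)

lemma H_dom:
  assumes h: "H a b c d" and pq: "b + d < a + c"
  shows "b \<le> a \<and> d \<le> c"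
proof (rule ccontr)
  assume "\<not> (b \<le> a \<and> d \<le> c)"
  then consider "a < b" | "c < d" by linarith
  thus False
  proof cases
    case 1
    hence cd: "d < c" using pq by simp
    have "(a+1)*(d+1) \<le> b * c" using 1 cd by (intro mult_mono) auto
    hence "int ((a+1)*(d+1)) \<le> int (b*c)" by (simp only: of_nat_le_iff)
    hence "int b * int c - int a * int d \<ge> int a + int d + 1" by (simp add: algebra_simps)
    hence e: "int b * int c - int a * int d = 1" "a = 0" "d = 0" using h by (auto simp: H_def)
    hence "int (b*c) = int 1" by simp
    hence "b * c = 1" by (simp only: of_nat_eq_iff)
    hence "b = 1" "c = 1" by auto
    thus False using pq e by simp
  next
    case 2
    hence ab: "b < a" using pq by simp
    have "(b+1)*(c+1) \<le> a * d" using 2 ab by (intro mult_mono) auto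
    hence "int ((b+1)*(c+1)) \<le> int (a*d)" by (simp only: of_nat_le_iff)
    hence "int a * int d - int b * int c \<ge> int b + int c + 1" by (simp add: algebra_simps)
    hence e: "int a * int d - int b * int c = 1" "b = 0" "c = 0" using h by (auto simp: H_def)
    hence "int (a*d) = int 1" by simp
    hence "a * d = 1" by (simp only: of_nat_eq_iff)
    hence "a = 1" "d = 1" by auto
    thus False using pq e by simp
  qed
qed

lemma E_add_step:
  assumes IH: "\<And>a' b' c' d'. a'+b'+c'+d' < a+b+c+d \<Longrightarrow> H a' b' c' d' \<Longrightarrow>
                 E (a'+c') (b'+d') = Suc (max (E a' b') (E c' d'))"
    and h: "H a b c d" and pq: "b + d < a + c"
  shows "E (a+c) (b+d) = Suc (max (E a b) (E c d))"
proof -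
  have dom: "b \<le> a" "d \<le> c" using H_dom[OF h pq] by auto
  have q: "0 < b + d"
  proof (rule ccontr)
    assume "\<not> 0 < b + d" hence "b = 0" "d = 0" by auto
    thus False using h by (simp add: H_def)
  qed
  have "E (a+c) (b+d) = Suc (E (a+c-(b+d)) (b+d))" using E_sub1[of "b+d" "a+c"] pq q by simp
  also have "a+c-(b+d) = (a-b) + (c-d)" using dom by simp
  finally have e1: "E (a+c) (b+d) = Suc (E ((a-b) + (c-d)) (b+d))" .
  have h': "H (a-b) b (c-d) d"
  proof -
    have "int (a-b) * int d - int b * int (c-d) = int a * int d - int b * int c"
      using dom by (simp add: of_nat_diff algebra_simps)
    thus ?thesis using h by (simp add: H_def)
  qed
  have e2: "E ((a-b) + (c-d)) (b+d) = Suc (max (E (a-b) b) (E (c-d) d))"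
    using IH[OF _ h'] dom q by simp
  have "max (E (a-b) b) (E (c-d) d) = max (E a b) (E c d) - 1 \<and> max (E a b) (E c d) \<ge> 1"
  proof (cases "b = 0")
    case True
    hence "d > 0" using q by simp
    hence "E c d = Suc (E (c-d) d)" using E_sub1[OF dom(2)] by simp
    thus ?thesis using True E0 by simp
  next
    case False
    hence eb: "E a b = Suc (E (a-b) b)" using E_sub1[OF dom(1)] by simp
    show ?thesis
    proof (cases "d = 0")
      case True thus ?thesis using eb E0 by simp
    next
      case False
      hence "E c d = Suc (E (c-d) d)" using E_sub1[OF dom(2)] by simp
      thus ?thesis using eb by simp
    qed
  qed
  thus ?thesis using e1 e2 by simp
qed

lemma E_add: "H a b c d \<Longrightarrow> E (a+c) (b+d) = Suc (max (E a b) (E c d))"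
proof (induction "a+b+c+d" arbitrary: a b c d rule: less_induct)
  case less
  consider "b + d < a + c" | "a + c < b + d" | "a + c = b + d" by linarith
  thus ?case
  proof cases
    case 1 thus ?thesis using E_add_step[OF _ less.prems] less.hyps by blast
  next
    case 2
    have "E (b+d) (a+c) = Suc (max (E b a) (E d c))"
      using E_add_step[of b a d c, OF _ H_swap[OF less.prems] 2] less.hyps by (simp add: add_ac)
    thus ?thesis by (simp add: E_sym)
  next
    case 3
    have c: "int c = int b + int d - int a" using arg_cong[OF 3, of int] by simp
    have "int a * int d - int b * int c = (int a - int b) * (int b + int d)"
      unfolding c by algebra
    hence "\<bar>(int a - int b) * (int b + int d)\<bar> = 1" using less.prems by (simp add: H_def)
    hence "\<bar>int a - int b\<bar> * \<bar>int b + int d\<bar> = 1" by (simp add: abs_mult)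
    hence "\<bar>int b + int d\<bar> = 1" using zmult_eq_1_iff[of "\<bar>int a - int b\<bar>" "\<bar>int b + int d\<bar>"] by auto
    hence bd: "b + d = 1" by simp
    hence ac: "a + c = 1" using 3 by simp
    show ?thesis using bd ac less.prems by (cases b; cases a) (auto simp: H_def E0 E_sub1)
  qed
qed



definition TQ :: "region set" where "TQ = {X \<in> Regions. 0 \<le> fst X \<and> 0 \<le> snd X}"
definition OQ :: "region set" where "OQ = {X \<in> Regions. 0 < fst X \<and> 0 < snd X}"
definition padd :: "region \<Rightarrow> region \<Rightarrow> region" where "padd X Y = (fst X + fst Y, snd X + snd Y)"
definition psub :: "region \<Rightarrow> region \<Rightarrow> region" where "psub X Y = (fst X - fst Y, snd X - snd Y)"
definition Ez :: "region \<Rightarrow> nat" where "Ez X = E (nat (fst X)) (nat (snd X))"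
definition Fz :: "region \<Rightarrow> nat" where "Fz X = nat (fst X + snd X)"
definition ge2 :: "region \<Rightarrow> region \<Rightarrow> bool" where "ge2 X Y \<longleftrightarrow> fst Y \<le> fst X \<and> snd Y \<le> snd X"
definition axp :: "region \<Rightarrow> region \<Rightarrow> bool" where
  "axp X Y \<longleftrightarrow> (X = (1,0) \<and> Y = (0,1)) \<or> (X = (0,1) \<and> Y = (1,0))"

lemma nonneg_Reg: assumes "0 \<le> e" "0 \<le> f" "coprime e (f::int)" shows "(e,f) \<in> Regions"
proof (cases "f = 0")
  case True
  hence "\<bar>e\<bar> = 1" using assms(3) by (simp add: zdvd1_eq)
  thus ?thesis using True assms by (simp add: Regions_iff)
next
  case False thus ?thesis using assms by (simp add: Regions_iff)
qed

lemma TQ_iff: "X \<in> TQ \<longleftrightarrow> X \<in> Regions \<and> 0 \<le> fst X \<and> 0 \<le> snd X" by (simp add: TQ_def)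

lemma fadj_nonneg:
  assumes "0 \<le> a" "0 \<le> b" "0 \<le> c" "0 \<le> d" "\<bar>a*d - b*c\<bar> = 1"
  shows "fadj (a,b) (c,d)" "(a,b) \<in> TQ" "(c,d) \<in> TQ"
proof -
  have c1: "coprime a b" by (rule coprime_det[where d=d and c=c]) (use assms(5) in arith)
  have e: "c*b - d*a = -(a*d - b*c)" by (simp add: algebra_simps)
  have c2: "coprime c d" by (rule coprime_det[where d=b and c=a]) (use assms(5) e in arith)
  have R: "(a,b) \<in> Regions" "(c,d) \<in> Regions" using nonneg_Reg c1 c2 assms by auto
  show "fadj (a,b) (c,d)" using R assms(5) by (simp add: fadj_def fdet_def)
  show "(a,b) \<in> TQ" "(c,d) \<in> TQ" using R assms by (auto simp: TQ_def)
qed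

lemma fadj_det: "fadj (a,b) (c,d) \<Longrightarrow> \<bar>a*d - b*c\<bar> = 1" by (simp add: fadj_def fdet_def)

lemma TQ_padd:
  assumes X: "X \<in> TQ" and Y: "Y \<in> TQ" and XY: "fadj X Y"
  shows "padd X Y \<in> TQ" "fadj X (padd X Y)" "fadj Y (padd X Y)" "fadj (padd X Y) X" "fadj (padd X Y) Y"
proof -
  obtain a b c d where ab: "X = (a,b)" "Y = (c,d)" by (cases X; cases Y) auto
  have nn: "0 \<le> a" "0 \<le> b" "0 \<le> c" "0 \<le> d" using X Y ab by (auto simp: TQ_def)
  have D: "\<bar>a*d - b*c\<bar> = 1" using fadj_det XY ab by simp
  have p: "padd X Y = (a+c, b+d)" using ab by (simp add: padd_def)
  have d1: "\<bar>a*(b+d) - b*(a+c)\<bar> = 1" using D by (simp add: algebra_simps)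
  have d2: "\<bar>c*(b+d) - d*(a+c)\<bar> = 1" using D by (simp add: algebra_simps abs_minus_commute)
  show "padd X Y \<in> TQ" "fadj X (padd X Y)" using fadj_nonneg[OF _ _ _ _ d1] nn ab p by auto
  show "fadj Y (padd X Y)" using fadj_nonneg[OF _ _ _ _ d2] nn ab p by auto
  thus "fadj (padd X Y) Y" by (rule fadj_sym)
  show "fadj (padd X Y) X" using fadj_nonneg[OF _ _ _ _ d1] nn ab p by (auto intro: fadj_sym)
qed

lemma TQ_nrm: "X \<in> TQ \<Longrightarrow> nrm X = X" using Regions_nrm by (simp add: TQ_def)

lemma TQ_dom:
  assumes X: "X \<in> TQ" and Y: "Y \<in> TQ" and XY: "fadj X Y" and nax: "\<not> axp X Y"
  shows "ge2 X Y \<or> ge2 Y X"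
proof (rule ccontr)
  obtain a b c d where ab: "X = (a,b)" "Y = (c,d)" by (cases X; cases Y) auto
  have nn: "0 \<le> a" "0 \<le> b" "0 \<le> c" "0 \<le> d" using X Y ab by (auto simp: TQ_def)
  have D: "\<bar>a*d - b*c\<bar> = 1" using fadj_det XY ab by simp
  assume "\<not> (ge2 X Y \<or> ge2 Y X)"
  hence "(c < a \<and> b < d) \<or> (a < c \<and> d < b)" using ab by (auto simp: ge2_def)
  thus False
  proof
    assume h: "c < a \<and> b < d"
    have "(c+1)*(b+1) \<le> a*d" using h nn by (intro mult_mono) auto
    hence "a*d - b*c \<ge> b + c + 1" by (simp add: algebra_simps)
    hence "a*d - b*c = 1" "b = 0" "c = 0" using D nn by auto
    hence "a*d = 1" by simp
    hence "a = 1" "d = 1" using nn by (auto simp: zmult_eq_1_iff)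
    thus False using nax ab \<open>b = 0\<close> \<open>c = 0\<close> by (simp add: axp_def)
  next
    assume h: "a < c \<and> d < b"
    have "(a+1)*(d+1) \<le> c*b" using h nn by (intro mult_mono) auto
    hence "b*c - a*d \<ge> a + d + 1" by (simp add: algebra_simps)
    hence "b*c - a*d = 1" "a = 0" "d = 0" using D nn by auto
    hence "b*c = 1" by simp
    hence "b = 1" "c = 1" using nn by (auto simp: zmult_eq_1_iff)
    thus False using nax ab \<open>a = 0\<close> \<open>d = 0\<close> by (simp add: axp_def)
  qed
qed

lemma TQ_psub:
  assumes X: "X \<in> TQ" and Y: "Y \<in> TQ" and XY: "fadj X Y" and g: "ge2 X Y"
  shows "psub X Y \<in> TQ" "fadj (psub X Y) Y" "fadj (psub X Y) X" "fadj Y (psub X Y)" "fadj X (psub X Y)"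
    "X = padd (psub X Y) Y"
proof -
  obtain a b c d where ab: "X = (a,b)" "Y = (c,d)" by (cases X; cases Y) auto
  have nn: "0 \<le> a" "0 \<le> b" "0 \<le> c" "0 \<le> d" "c \<le> a" "d \<le> b" using X Y ab g by (auto simp: TQ_def ge2_def)
  have D: "\<bar>a*d - b*c\<bar> = 1" using fadj_det XY ab by simp
  have p: "psub X Y = (a-c, b-d)" using ab by (simp add: psub_def)
  have d1: "\<bar>(a-c)*d - (b-d)*c\<bar> = 1" using D by (simp add: algebra_simps)
  have d2: "\<bar>(a-c)*b - (b-d)*a\<bar> = 1" using D by (simp add: algebra_simps abs_minus_commute)
  show "psub X Y \<in> TQ" "fadj (psub X Y) Y" using fadj_nonneg[OF _ _ _ _ d1] nn ab p by auto
  show "fadj (psub X Y) X" using fadj_nonneg[OF _ _ _ _ d2] nn ab p by auto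
  show "fadj Y (psub X Y)" using fadj_nonneg[OF _ _ _ _ d1] nn ab p by (auto intro: fadj_sym)
  show "fadj X (psub X Y)" using fadj_nonneg[OF _ _ _ _ d2] nn ab p by (auto intro: fadj_sym)
  show "X = padd (psub X Y) Y" using ab by (simp add: padd_def psub_def)
qed

lemma Ez_add:
  assumes X: "X \<in> TQ" and Y: "Y \<in> TQ" and XY: "fadj X Y"
  shows "Ez (padd X Y) = Suc (max (Ez X) (Ez Y))"
proof -
  obtain a b c d where ab: "X = (a,b)" "Y = (c,d)" by (cases X; cases Y) auto
  have nn: "0 \<le> a" "0 \<le> b" "0 \<le> c" "0 \<le> d" using X Y ab by (auto simp: TQ_def)
  have D: "\<bar>a*d - b*c\<bar> = 1" using fadj_det XY ab by simp
  have "H (nat a) (nat b) (nat c) (nat d)" using D nn by (simp add: H_def)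
  from E_add[OF this] show ?thesis using ab nn by (simp add: Ez_def padd_def nat_add_distrib)
qed

lemma Ez_gt:
  assumes X: "X \<in> TQ" and Y: "Y \<in> TQ" and XY: "fadj X Y"
  shows "Ez X < Ez (padd X Y)" "Ez Y < Ez (padd X Y)"
  using Ez_add[OF assms] by auto

lemma TQ_common:
  assumes X: "X \<in> TQ" and Y: "Y \<in> TQ" and XY: "fadj X Y" and g: "ge2 X Y"
    and W: "fadj X W" "fadj Y W"
  shows "W = padd X Y \<or> W = psub X Y"
proof -
  have "W = nrm (padd X Y) \<or> W = nrm (psub X Y)" using common_nbr[OF XY W] by (simp add: padd_def psub_def)
  thus ?thesis using TQ_nrm TQ_padd(1)[OF X Y XY] TQ_psub(1)[OF X Y XY g] by auto
qed

lemma vert_TQ: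
  assumes v: "v \<in> Verts" "v \<subseteq> TQ"
  shows "\<exists>X Y. X \<in> TQ \<and> Y \<in> TQ \<and> fadj X Y \<and> v = {X, Y, padd X Y}"
proof -
  obtain P Q R where v': "v = {P,Q,R}" "fadj P Q" "fadj Q R" "fadj P R" using v(1) unfolding Verts_iff by blast
  have T: "P \<in> TQ" "Q \<in> TQ" "R \<in> TQ" using v' v(2) by auto
  have "R = nrm (padd P Q) \<or> R = nrm (psub P Q)"
    using common_nbr[OF v'(2) v'(4) v'(3)] by (simp add: padd_def psub_def)
  hence "R = padd P Q \<or> R = psub P Q \<or> R = psub Q P"
    using nrm_cases[of "padd P Q"] nrm_cases[of "psub P Q"] TQ_nrm[OF TQ_padd(1)[OF T(1,2) v'(2)]]
    by (auto simp: psub_def padd_def)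
  moreover
  { assume "R = psub P Q"
    hence "P = padd Q R" by (simp add: padd_def psub_def)
    hence ?thesis using T v' by (intro exI[of _ Q] exI[of _ R]) (auto intro: fadj_sym) }
  moreover
  { assume "R = psub Q P"
    hence "Q = padd P R" by (simp add: padd_def psub_def)
    hence ?thesis using T v' by (intro exI[of _ P] exI[of _ R]) auto }
  moreover
  { assume "R = padd P Q"
    hence ?thesis using T v' by (intro exI[of _ P] exI[of _ Q]) auto }
  ultimately show ?thesis by blast
qed

lemma nbr_OQ:
  assumes Z: "Z \<in> OQ" and ZW: "fadj Z W" shows "W \<in> TQ"
proof -
  obtain a b c d where ab: "Z = (a,b)" "W = (c,d)" by (cases Z; cases W) auto
  have nn: "0 < a" "0 < b" using Z ab by (auto simp: OQ_def)
  have D: "\<bar>a*d - b*c\<bar> = 1" using fadj_det ZW ab by simp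
  have WR: "W \<in> Regions" using fadj_Regions(2)[OF ZW] .
  hence d: "d > 0 \<or> (d = 0 \<and> c = 1)" using ab by (simp add: Regions_iff)
  have "0 \<le> c"
  proof (rule ccontr)
    assume "\<not> 0 \<le> c"
    hence "d > 0" using d by auto
    have "a*d \<ge> 1*1" using nn \<open>d > 0\<close> by (intro mult_mono) auto
    moreover have "b*(-c) \<ge> 1*1" using nn \<open>\<not> 0 \<le> c\<close> by (intro mult_mono) auto
    ultimately have "a*d - b*c \<ge> 2" by (simp add: algebra_simps)
    thus False using D by simp
  qed
  thus ?thesis using WR d ab by (auto simp: TQ_def)
qed

lemma vert_OQ: assumes v: "v \<in> Verts" "Z \<in> v" "Z \<in> OQ" shows "v \<subseteq> TQ"
proof (rule subsetI)
  fix W assume W: "W \<in> v"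
  show "W \<in> TQ"
  proof (cases "W = Z")
    case True thus ?thesis using v(3) by (simp add: OQ_def TQ_def)
  next
    case False thus ?thesis using Verts_adj[OF v(1) v(2) W] nbr_OQ v(3) by auto
  qed
qed

lemma OQ_TQ: "Z \<in> OQ \<Longrightarrow> Z \<in> TQ" by (simp add: OQ_def TQ_def)

lemma parents_aux:
  "0 < a \<Longrightarrow> 0 < b \<Longrightarrow> coprime a b \<Longrightarrow> \<exists>X Y. X \<in> TQ \<and> Y \<in> TQ \<and> fadj X Y \<and> (a,b) = padd X Y"
  proof (induction "nat (a+b)" arbitrary: a b rule: less_induct)
    case less
    consider "a = b" | "b < a" | "a < b" by linarith
    thus ?case
    proof cases
      case 1
      hence "a = 1" using less.prems by (simp add: zdvd1_eq)
      hence "(a,b) = padd (1,0) (0,1)" using 1 by (simp add: padd_def)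
      moreover have "fadj (1,0) (0,1)" "(1::int,0::int) \<in> TQ" "(0::int,1::int) \<in> TQ" using fadj_nonneg[of 1 0 0 1] by auto
      ultimately show ?thesis by blast
    next
      case 2
      have cp: "coprime (a-b) b" using less.prems(3) by (simp add: coprime_iff_gcd_eq_1 gcd_diff1)
      obtain X Y where XY: "X \<in> TQ" "Y \<in> TQ" "fadj X Y" "(a-b, b) = padd X Y"
        using less.hyps[of "a-b" b] 2 less.prems cp by force
      obtain x1 x2 y1 y2 where xy: "X = (x1,x2)" "Y = (y1,y2)" by (cases X; cases Y) auto
      have nn: "0 \<le> x1" "0 \<le> x2" "0 \<le> y1" "0 \<le> y2" using XY xy by (auto simp: TQ_def)
      have D: "\<bar>x1*y2 - x2*y1\<bar> = 1" using fadj_det XY(3) xy by simp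
      have D': "\<bar>(x1+x2)*y2 - x2*(y1+y2)\<bar> = 1" using D by (simp add: algebra_simps)
      have "(a,b) = padd (x1+x2,x2) (y1+y2,y2)" using XY(4) xy by (auto simp: padd_def)
      have nn2: "0 \<le> x1+x2" "0 \<le> y1+y2" using nn by auto
      thus ?thesis using fadj_nonneg[OF nn2(1) nn(2) nn2(2) nn(4) D'] \<open>(a,b) = _\<close> by blast
    next
      case 3
      have "gcd a (b-a) = gcd b a" by (metis gcd.commute gcd_diff1)
      hence cp: "coprime a (b-a)" using less.prems(3) by (simp add: coprime_iff_gcd_eq_1 gcd.commute)
      obtain X Y where XY: "X \<in> TQ" "Y \<in> TQ" "fadj X Y" "(a, b-a) = padd X Y"
        using less.hyps[of a "b-a"] 3 less.prems cp by force
      obtain x1 x2 y1 y2 where xy: "X = (x1,x2)" "Y = (y1,y2)" by (cases X; cases Y) auto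
      have nn: "0 \<le> x1" "0 \<le> x2" "0 \<le> y1" "0 \<le> y2" using XY xy by (auto simp: TQ_def)
      have D: "\<bar>x1*y2 - x2*y1\<bar> = 1" using fadj_det XY(3) xy by simp
      have D': "\<bar>x1*(y1+y2) - (x1+x2)*y1\<bar> = 1" using D by (simp add: algebra_simps)
      have "(a,b) = padd (x1,x1+x2) (y1,y1+y2)" using XY(4) xy by (auto simp: padd_def)
      have nn2: "0 \<le> x1+x2" "0 \<le> y1+y2" using nn by auto
      thus ?thesis using fadj_nonneg[OF nn(1) nn2(1) nn(3) nn2(2) D'] \<open>(a,b) = _\<close> by blast
    qed
  qed

lemma parents:
  assumes Z: "Z \<in> OQ" shows "\<exists>X Y. X \<in> TQ \<and> Y \<in> TQ \<and> fadj X Y \<and> Z = padd X Y"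
proof -
  obtain a b where ab: "Z = (a,b)" by (cases Z)
  have "0 < a" "0 < b" "coprime a b" using Z ab by (auto simp: OQ_def Regions_iff)
  thus ?thesis using parents_aux ab by simp
qed



lemma fadj_10_01: "fadj (1,0) (0,1)" using fadj_nonneg[of 1 0 0 1] by simp

lemma h0_reg: "(-1::int, 1::int) \<in> Regions" by (simp add: Regions_iff)

lemma t0_Verts: "t0 \<in> Verts"
proof -
  have "fadj (1,0) (0,1)" "fadj (0,1) (1,1)" "fadj (1,0) (1,1)"
    using fadj_nonneg[of 1 0 0 1] fadj_nonneg[of 0 1 1 1] fadj_nonneg[of 1 0 1 1] by simp_all
  thus ?thesis unfolding t0_def by (rule Verts_insert)
qed

lemma h0_Verts: "h0 \<in> Verts"
proof -
  have R: "(1::int,0::int) \<in> Regions" "(0::int,1::int) \<in> Regions" by (simp_all add: Regions_iff)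
  have "fadj (1,0) (0,1)" "fadj (0,1) (-1,1)" "fadj (1,0) (-1,1)"
    using R h0_reg by (simp_all add: fadj_def fdet_def)
  thus ?thesis unfolding h0_def by (rule Verts_insert)
qed

lemma t0_TQ: "t0 \<subseteq> TQ" using t0_Verts Verts_Regions by (auto simp: t0_def TQ_def)
lemma h0_TQ: "\<not> h0 \<subseteq> TQ" by (auto simp: h0_def TQ_def)
lemma t0_ne_h0: "t0 \<noteq> h0" using t0_TQ h0_TQ by auto
lemma t0_h0: "t0 \<inter> h0 = {(1,0),(0,1)}" by (auto simp: t0_def h0_def)

lemma vadj_t0_h0: "vadj t0 h0" "vadj h0 t0"
  using t0_Verts h0_Verts t0_ne_h0 t0_h0 by (auto simp: vadj_def Int_commute)

lemma vadj_sym: "vadj u w \<Longrightarrow> vadj w u" by (auto simp: vadj_def Int_commute)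

lemma axp_common:
  assumes "axp P Q" "fadj P Z" "fadj Q Z"
  shows "Z = (1,1) \<or> Z = (-1,1)"
proof -
  have "fadj P Q" using assms(1) fadj_10_01 fadj_sym by (auto simp: axp_def)
  from common_nbr[OF this assms(2,3)] show ?thesis using assms(1) by (auto simp: axp_def nrm_def)
qed

lemma axp_sets: "axp P Q \<Longrightarrow> {P, Q, (1,1)} = t0 \<and> {P, Q, (-1,1)} = h0"
  by (auto simp: axp_def t0_def h0_def)

lemma tail_order:
  assumes "P \<in> TQ" "Q \<in> TQ" "fadj P Q" "\<not> axp P Q"
  obtains X Y where "{X,Y} = {P,Q}" "X \<in> TQ" "Y \<in> TQ" "fadj X Y" "ge2 X Y"
  using TQ_dom[OF assms] assms fadj_sym by (metis insert_commute)

lemma closure: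
  assumes uw: "vadj u w" and u: "u \<subseteq> TQ" and ne: "{u,w} \<noteq> {t0,h0}"
  shows "w \<subseteq> TQ"
proof -
  obtain P Q Z W where s: "u = {P,Q,Z}" "w = {P,Q,W}" "fadj P Q" "fadj P Z" "fadj Q Z"
     "fadj P W" "fadj Q W" "Z \<noteq> W" using vadj_struct[OF uw] by blast
  have T: "P \<in> TQ" "Q \<in> TQ" "Z \<in> TQ" using u s(1) by auto
  show ?thesis
  proof (cases "axp P Q")
    case True
    have "Z = (1,1) \<or> Z = (-1,1)" "W = (1,1) \<or> W = (-1,1)" using axp_common[OF True] s by auto
    moreover have "Z \<noteq> (-1,1)" using T(3) by (auto simp: TQ_def)
    ultimately have "Z = (1,1)" "W = (-1,1)" using s(8) by auto
    hence "u = t0" "w = h0" using axp_sets[OF True] s(1,2) by auto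
    thus ?thesis using ne by simp
  next
    case False
    then obtain X Y where o: "{X,Y} = {P,Q}" "X \<in> TQ" "Y \<in> TQ" "fadj X Y" "ge2 X Y"
      using tail_order[OF T(1,2) s(3)] by blast
    have "fadj X W" "fadj Y W" using o(1) s(6,7) by (metis doubleton_eq_iff)+
    hence "W = padd X Y \<or> W = psub X Y" using TQ_common[OF o(2-5)] by blast
    hence "W \<in> TQ" using TQ_padd(1)[OF o(2-4)] TQ_psub(1)[OF o(2-5)] by auto
    thus ?thesis using s(2) T by auto
  qed
qed

definition psi :: "region set \<Rightarrow> nat" where
  "psi v = (if v \<subseteq> TQ then Max (Ez ` v) else 0)"

lemma psi_sum:
  assumes "X \<in> TQ" "Y \<in> TQ" "fadj X Y"
  shows "psi {X, Y, padd X Y} = Ez (padd X Y)"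
proof -
  have "{X, Y, padd X Y} \<subseteq> TQ" using assms TQ_padd(1)[OF assms] by auto
  moreover have "Max (Ez ` {X, Y, padd X Y}) = Ez (padd X Y)"
    using Ez_gt[OF assms] by (simp add: max_def)
  ultimately show ?thesis by (simp add: psi_def)
qed

lemma psi_t0: "psi t0 = 1"
proof -
  have "t0 = {(1,0), (0,1), padd (1,0) (0,1)}" by (simp add: t0_def padd_def)
  moreover have "(1::int,0::int) \<in> TQ" "(0::int,1::int) \<in> TQ" by (simp_all add: TQ_def Regions_iff)
  moreover have "psi {(1,0), (0,1), padd (1,0) (0,1)} = Ez (padd (1,0) (0,1))"
    by (rule psi_sum) (simp_all add: TQ_def Regions_iff fadj_10_01)
  ultimately have "psi t0 = Ez (padd (1,0) (0,1))" by simp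
  also have "\<dots> = 1" by (simp add: padd_def Ez_def E_sub1 E0)
  finally show ?thesis .
qed

lemma psi_h0: "psi h0 = 0" using h0_TQ by (simp add: psi_def)

lemma psi_diff:
  assumes "X \<in> TQ" "Y \<in> TQ" "fadj X Y" "ge2 X Y"
  shows "psi {X, Y, psub X Y} = Ez X" "Ez (padd X Y) = Suc (Ez X)"
proof -
  let ?D = "psub X Y"
  have D: "?D \<in> TQ" "fadj ?D Y" "X = padd ?D Y" using TQ_psub[OF assms] by auto
  have "{X, Y, ?D} = {?D, Y, padd ?D Y}" using D(3) by auto
  hence "psi {X, Y, ?D} = Ez (padd ?D Y)" using psi_sum[OF D(1) assms(2) D(2)] by simp
  thus "psi {X, Y, ?D} = Ez X" using D(3) by simp
  have "Ez Y < Ez X" using Ez_gt(2)[OF D(1) assms(2) D(2)] D(3) by simp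
  thus "Ez (padd X Y) = Suc (Ez X)" using Ez_add[OF assms(1-3)] by simp
qed

lemma psi_lip:
  assumes uw: "vadj u w" shows "psi w \<le> Suc (psi u)"
proof (cases "w \<subseteq> TQ")
  case False thus ?thesis by (simp add: psi_def)
next
  case wT: True
  show ?thesis
  proof (cases "u \<subseteq> TQ")
    case False
    have "{w,u} = {t0,h0}" using closure[OF vadj_sym[OF uw] wT] False by blast
    hence "w = t0" using wT h0_TQ by (metis doubleton_eq_iff)
    thus ?thesis using psi_t0 by simp
  next
    case uT: True
    obtain P Q Z W where s: "u = {P,Q,Z}" "w = {P,Q,W}" "fadj P Q" "fadj P Z" "fadj Q Z"
       "fadj P W" "fadj Q W" "Z \<noteq> W" using vadj_struct[OF uw] by blast
    have T: "P \<in> TQ" "Q \<in> TQ" "Z \<in> TQ" "W \<in> TQ" using uT wT s(1,2) by auto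
    have nax: "\<not> axp P Q"
    proof
      assume ax: "axp P Q"
      have "Z = (1,1) \<or> Z = (-1,1)" "W = (1,1) \<or> W = (-1,1)" using axp_common[OF ax] s by auto
      moreover have "Z \<noteq> (-1,1)" "W \<noteq> (-1,1)" using T by (auto simp: TQ_def)
      ultimately show False using s(8) by auto
    qed
    obtain X Y where o: "{X,Y} = {P,Q}" "X \<in> TQ" "Y \<in> TQ" "fadj X Y" "ge2 X Y"
      using tail_order[OF T(1,2) s(3) nax] by blast
    have "fadj X W" "fadj Y W" "fadj X Z" "fadj Y Z" using o(1) s(4-7) by (metis doubleton_eq_iff)+
    hence ZW: "Z = padd X Y \<or> Z = psub X Y" "W = padd X Y \<or> W = psub X Y"
      using TQ_common[OF o(2-5)] by blast+
    have uw': "u = {X,Y,Z}" "w = {X,Y,W}" using s(1,2) o(1) by auto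
    have p1: "psi {X, Y, padd X Y} = Suc (Ez X)" using psi_sum[OF o(2-4)] psi_diff[OF o(2-5)] by simp
    have p2: "psi {X, Y, psub X Y} = Ez X" using psi_diff[OF o(2-5)] by simp
    show ?thesis using ZW s(8) uw' p1 p2 by auto
  qed
qed

lemma walk_lower: "(vadj ^^ n) h0 v \<Longrightarrow> psi v \<le> n"
proof (induction n arbitrary: v)
  case 0 thus ?case using psi_h0 by simp
next
  case (Suc n)
  then obtain y where "(vadj ^^ n) h0 y" "vadj y v" by (auto elim: relpowp_Suc_E)
  thus ?case using Suc.IH psi_lip by (meson Suc_le_mono le_trans)
qed

definition Rt :: "region set \<Rightarrow> region set \<Rightarrow> bool" where
  "Rt u w \<longleftrightarrow> vadj u w \<and> {u, w} \<noteq> {t0, h0}"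

lemma side_minus_t0: "side_minus t0 h0 = {v. Rt\<^sup>*\<^sup>* t0 v}"
  unfolding side_minus_def Rt_def by simp

lemma vadj_step:
  assumes "X \<in> TQ" "Y \<in> TQ" "fadj X Y" "ge2 X Y"
  shows "vadj {psub X Y, Y, X} {X, Y, padd X Y}"
proof -
  let ?D = "psub X Y" and ?S = "padd X Y"
  have D: "?D \<in> TQ" "fadj ?D Y" "fadj ?D X" using TQ_psub[OF assms] by auto
  have S: "fadj X ?S" "fadj Y ?S" using TQ_padd[OF assms(1-3)] by auto
  have Y0: "Y \<noteq> (0,0)" "X \<noteq> (0,0)" using assms(1,2) by (auto simp: TQ_def Regions_iff)
  have n1: "?D \<noteq> X" using Y0 by (cases X; cases Y) (auto simp: psub_def)
  have n2: "?D \<noteq> Y" using D(2) fadj_neq by blast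
  have n3: "?D \<noteq> ?S" using Y0 by (cases X; cases Y) (auto simp: psub_def padd_def)
  have n4: "?S \<noteq> X" using Y0 by (cases X; cases Y) (auto simp: padd_def)
  have n5: "?S \<noteq> Y" using Y0 by (cases X; cases Y) (auto simp: padd_def)
  have XY: "X \<noteq> Y" using assms(3) fadj_neq by blast
  have "{?D, Y, X} \<inter> {X, Y, ?S} = {X, Y}" using n1 n2 n3 n4 n5 by blast
  hence "card ({?D, Y, X} \<inter> {X, Y, ?S}) = 2" using XY by simp
  moreover have "{?D, Y, X} \<in> Verts" using D assms(3) Verts_insert fadj_sym by metis
  moreover have "{X, Y, ?S} \<in> Verts" using S assms(3) Verts_insert by metis
  moreover have "{?D, Y, X} \<noteq> {X, Y, ?S}" using n3 n1 n2 by blast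
  ultimately show ?thesis by (simp add: vadj_def)
qed

lemma Fz_pos: "X \<in> TQ \<Longrightarrow> 1 \<le> Fz X"
  by (cases X) (auto simp: TQ_def Fz_def Regions_iff)

lemma Fz_add: "X \<in> TQ \<Longrightarrow> Y \<in> TQ \<Longrightarrow> Fz (padd X Y) = Fz X + Fz Y"
  by (cases X; cases Y) (auto simp: TQ_def Fz_def padd_def nat_add_distrib)

lemma reach_walk:
  assumes "X \<in> TQ" "Y \<in> TQ" "fadj X Y"
  shows "Rt\<^sup>*\<^sup>* t0 {X, Y, padd X Y} \<and> (vadj ^^ Ez (padd X Y)) h0 {X, Y, padd X Y}"
  using assms
proof (induction "Fz (padd X Y)" arbitrary: X Y rule: less_induct)
  case less
  show ?case
  proof (cases "axp X Y")
    case True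
    have "{X, Y, padd X Y} = t0" "padd X Y = (1,1)" using True by (auto simp: axp_def t0_def padd_def)
    moreover have "Ez (1,1) = 1" by (simp add: Ez_def E_sub1 E0)
    moreover have "(vadj ^^ 1) h0 t0" using relpowp_Suc_I[where P=vadj and n=0 and x=h0 and y=h0 and z=t0] vadj_t0_h0(2) by simp
    ultimately show ?thesis by simp
  next
    case False
    obtain X' Y' where o: "{X',Y'} = {X,Y}" "X' \<in> TQ" "Y' \<in> TQ" "fadj X' Y'" "ge2 X' Y'"
      using tail_order[OF less.prems False] by blast
    have sw: "padd X' Y' = padd X Y" "{X', Y', padd X' Y'} = {X, Y, padd X Y}"
      using o(1) by (auto simp: doubleton_eq_iff padd_def)
    let ?D = "psub X' Y'"
    have D: "?D \<in> TQ" "fadj ?D Y'" "X' = padd ?D Y'" using TQ_psub[OF o(2-5)] by auto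
    have "Fz (padd ?D Y') < Fz (padd X Y)"
      using D(3) sw(1) Fz_add[OF o(2,3)] Fz_pos[OF o(3)] by simp
    hence IH: "Rt\<^sup>*\<^sup>* t0 {?D, Y', X'} \<and> (vadj ^^ Ez X') h0 {?D, Y', X'}"
      using less.hyps[OF _ D(1) o(3) D(2)] D(3) by simp
    have va: "vadj {?D, Y', X'} {X', Y', padd X' Y'}" using vadj_step[OF o(2-5)] .
    have "{X', Y', padd X' Y'} \<subseteq> TQ" using o TQ_padd(1)[OF o(2-4)] by auto
    hence "{{?D, Y', X'}, {X', Y', padd X' Y'}} \<noteq> {t0, h0}" using h0_TQ
      by (metis D(1) o(2,3) doubleton_eq_iff empty_subsetI insert_subset)
    hence "Rt {?D, Y', X'} {X', Y', padd X' Y'}" using va by (simp add: Rt_def)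
    hence r1: "Rt\<^sup>*\<^sup>* t0 {X', Y', padd X' Y'}" using IH by (meson rtranclp.rtrancl_into_rtrancl)
    have "(vadj ^^ Suc (Ez X')) h0 {X', Y', padd X' Y'}" using IH va by (meson relpowp_Suc_I)
    moreover have "Ez (padd X' Y') = Suc (Ez X')" using psi_diff(2)[OF o(2-5)] .
    ultimately show ?thesis using r1 sw by simp
  qed
qed

lemma side_minus_sub: "v \<in> side_minus t0 h0 \<Longrightarrow> v \<subseteq> TQ"
proof -
  assume "v \<in> side_minus t0 h0"
  hence "Rt\<^sup>*\<^sup>* t0 v" by (simp add: side_minus_t0)
  thus ?thesis
  proof (induction rule: rtranclp_induct)
    case base thus ?case using t0_TQ .
  next
    case (step y z) thus ?case using closure[of y z] by (simp add: Rt_def)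
  qed
qed

lemma side_minus_sup: assumes "v \<in> Verts" "v \<subseteq> TQ" shows "v \<in> side_minus t0 h0"
proof -
  obtain X Y where "X \<in> TQ" "Y \<in> TQ" "fadj X Y" "v = {X, Y, padd X Y}" using vert_TQ[OF assms] by blast
  thus ?thesis using reach_walk side_minus_t0 by simp
qed

lemma TQ_split0: assumes "X \<in> TQ" shows "X \<in> OQ \<or> X = (1,0) \<or> X = (0,1)"
proof -
  obtain a b where ab: "X = (a,b)" by (cases X)
  have h: "0 \<le> a" "0 \<le> b" "coprime a b" "b > 0 \<or> (b = 0 \<and> a = 1)" using assms ab by (auto simp: TQ_def Regions_iff)
  show ?thesis
  proof (cases "a = 0")
    case True
    hence "\<bar>b\<bar> = 1" using h(3) by (simp add: zdvd1_eq)
    thus ?thesis using True h ab by simp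
  next
    case False
    hence "0 < a" using h by simp
    thus ?thesis using h ab assms by (auto simp: OQ_def TQ_def)
  qed
qed

lemma Omega_minus_t0: "Omega_minus t0 h0 = OQ"
proof
  show "OQ \<subseteq> Omega_minus t0 h0"
  proof
    fix Z assume Z: "Z \<in> OQ"
    have "\<forall>v\<in>Verts. Z \<in> v \<longrightarrow> v \<in> side_minus t0 h0"
    proof (intro ballI impI)
      fix v assume "v \<in> Verts" "Z \<in> v"
      thus "v \<in> side_minus t0 h0" using vert_OQ[OF _ _ Z] side_minus_sup by simp
    qed
    thus "Z \<in> Omega_minus t0 h0" using Z by (simp add: Omega_minus_def OQ_def)
  qed
next
  show "Omega_minus t0 h0 \<subseteq> OQ"
  proof
    fix Z assume Z: "Z \<in> Omega_minus t0 h0"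
    have ZR: "Z \<in> Regions" and Zv: "\<forall>v\<in>Verts. Z \<in> v \<longrightarrow> v \<in> side_minus t0 h0"
      using Z by (auto simp: Omega_minus_def)
    obtain W where ZW: "fadj Z W" using nbr_exists[OF ZR] by blast
    have "{Z, W, nrm (fst Z + fst W, snd Z + snd W)} \<in> Verts"
      using nrm_sum_adj(1,2)[OF ZW] ZW by (meson Verts_insert)
    hence "Z \<in> TQ" using Zv side_minus_sub by blast
    moreover have "Z \<notin> h0"
    proof
      assume "Z \<in> h0"
      hence "h0 \<subseteq> TQ" using Zv h0_Verts side_minus_sub by blast
      thus False using h0_TQ by simp
    qed
    ultimately show "Z \<in> OQ" using TQ_split0[of Z] by (simp add: h0_def)
  qed
qed

lemma TQ_split: "X \<in> TQ \<Longrightarrow> X \<in> OQ \<or> X \<in> t0 \<inter> h0"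
  using TQ_split0 t0_h0 by auto

lemma Omega_0minus_t0: "Omega_0minus t0 h0 = TQ"
  unfolding Omega_0minus_def Omega_minus_t0 using TQ_split OQ_TQ t0_TQ by blast



lemma dhead_axis: assumes "Z \<in> t0 \<inter> h0" shows "dhead h0 Z = 0"
proof -
  have "\<exists>v\<in>Verts. Z \<in> v \<and> (vadj ^^ 0) h0 v" using assms h0_Verts by auto
  thus ?thesis unfolding dhead_def by (rule Least_eq_0)
qed

lemma Ez_axis: "Z \<in> t0 \<inter> h0 \<Longrightarrow> Ez Z = 0"
  using t0_h0 by (auto simp: Ez_def E0)

lemma dhead_OQ: assumes Z: "Z \<in> OQ" shows "dhead h0 Z = Ez Z"
proof -
  obtain X Y where XY: "X \<in> TQ" "Y \<in> TQ" "fadj X Y" "Z = padd X Y" using parents[OF Z] by blast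
  have P: "\<exists>v\<in>Verts. Z \<in> v \<and> (vadj ^^ Ez Z) h0 v"
  proof -
    have V: "{X, Y, Z} \<in> Verts"
      using Verts_insert[OF XY(3) TQ_padd(3)[OF XY(1-3)] TQ_padd(2)[OF XY(1-3)]] XY(4) by simp
    have W: "(vadj ^^ Ez Z) h0 {X, Y, Z}" using reach_walk[OF XY(1-3)] XY(4) by simp
    show ?thesis
    proof (rule bexI[where x="{X,Y,Z}"])
      show "{X,Y,Z} \<in> Verts" by (rule V)
      show "Z \<in> {X, Y, Z} \<and> (vadj ^^ Ez Z) h0 {X, Y, Z}" using W by simp
    qed
  qed
  have L: "Ez Z \<le> m" if asm: "\<exists>v\<in>Verts. Z \<in> v \<and> (vadj ^^ m) h0 v" for m
  proof -
    obtain v where v: "v \<in> Verts" "Z \<in> v" "(vadj ^^ m) h0 v" using asm by blast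
    have "v \<subseteq> TQ" using vert_OQ[OF v(1,2) Z] .
    hence "psi v = Max (Ez ` v)" by (simp add: psi_def)
    moreover have "Ez Z \<le> Max (Ez ` v)" using Verts_card[OF v(1)] v(2) by (simp add: Max_ge)
    ultimately show ?thesis using walk_lower[OF v(3)] by simp
  qed
  show ?thesis unfolding dhead_def by (rule Least_equality[where P="\<lambda>n. \<exists>v\<in>Verts. Z \<in> v \<and> (vadj ^^ n) h0 v", OF P L])
qed

lemma dhead_TQ: "Z \<in> TQ \<Longrightarrow> dhead h0 Z = Ez Z"
  using TQ_split dhead_axis Ez_axis dhead_OQ by fastforce

lemma fib_unique: "fib_rel t0 h0 Z n \<Longrightarrow> n = Fz Z"
proof (induction rule: fib_rel.induct)
  case (base Z) thus ?case using t0_h0 by (auto simp: Fz_def)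
next
  case (step Z X Y a b)
  have ZO: "Z \<in> OQ" using step.hyps(1) Omega_minus_t0 by simp
  have XT: "X \<in> TQ" "Y \<in> TQ" using step.hyps(2,3) Omega_0minus_t0 by auto
  have EX: "Ez X < Ez Z" "Ez Y < Ez Z"
    using step.hyps(6,7) dhead_TQ XT OQ_TQ[OF ZO] by auto
  have v: "{X,Y,Z} \<subseteq> TQ" using vert_OQ[OF step.hyps(5) _ ZO] by simp
  obtain P Q where PQ: "P \<in> TQ" "Q \<in> TQ" "fadj P Q" "{X,Y,Z} = {P, Q, padd P Q}"
    using vert_TQ[OF step.hyps(5) v] by blast
  have G: "Ez P < Ez (padd P Q)" "Ez Q < Ez (padd P Q)" using Ez_gt[OF PQ(1-3)] by auto
  have d: "X \<noteq> Y" "X \<noteq> Z" "Y \<noteq> Z" using step.hyps(4) EX by auto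
  have "Z = padd P Q"
  proof (rule ccontr)
    assume nz: "Z \<noteq> padd P Q"
    have "padd P Q \<in> {X,Y,Z}" using PQ(4) by auto
    hence "padd P Q = X \<or> padd P Q = Y" using nz by auto
    moreover have "Z = P \<or> Z = Q" using PQ(4) nz by auto
    ultimately show False using EX G by auto
  qed
  have m: "X \<in> {P,Q,padd P Q}" "Y \<in> {P,Q,padd P Q}" using PQ(4) by blast+
  have "X \<in> {P,Q}" "Y \<in> {P,Q}" using m d \<open>Z = padd P Q\<close> by blast+
  hence "(X = P \<and> Y = Q) \<or> (X = Q \<and> Y = P)" using d(1) by blast
  hence "Fz X + Fz Y = Fz P + Fz Q" by auto
  thus ?case using step.IH Fz_add[OF PQ(1,2)] \<open>Z = padd P Q\<close> by simp
qed

lemma fib_exists: "Z \<in> TQ \<Longrightarrow> fib_rel t0 h0 Z (Fz Z)"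
proof (induction "Fz Z" arbitrary: Z rule: less_induct)
  case less
  show ?case
  proof (cases "Z \<in> t0 \<inter> h0")
    case True
    hence "Fz Z = 1" using t0_h0 by (auto simp: Fz_def)
    thus ?thesis using True fib_rel.base by simp
  next
    case False
    hence ZO: "Z \<in> OQ" using TQ_split less.prems by blast
    obtain X Y where XY: "X \<in> TQ" "Y \<in> TQ" "fadj X Y" "Z = padd X Y" using parents[OF ZO] by blast
    have F: "Fz Z = Fz X + Fz Y" using Fz_add[OF XY(1,2)] XY(4) by simp
    have "Fz X < Fz Z" "Fz Y < Fz Z" using F Fz_pos[OF XY(1)] Fz_pos[OF XY(2)] by auto
    hence IH: "fib_rel t0 h0 X (Fz X)" "fib_rel t0 h0 Y (Fz Y)" using less.hyps XY by auto
    have V: "{X, Y, Z} \<in> Verts"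
      using Verts_insert[OF XY(3) TQ_padd(3)[OF XY(1-3)] TQ_padd(2)[OF XY(1-3)]] XY(4) by simp
    have D: "dhead h0 X < dhead h0 Z" "dhead h0 Y < dhead h0 Z"
      using dhead_TQ XY(1,2) less.prems Ez_gt[OF XY(1-3)] XY(4) by auto
    have "fib_rel t0 h0 Z (Fz X + Fz Y)"
      using fib_rel.step[OF _ _ _ _ V D IH] ZO Omega_minus_t0 Omega_0minus_t0 XY fadj_neq by simp
    thus ?thesis using F by simp
  qed
qed

lemma fib_std: "Z \<in> TQ \<Longrightarrow> fib_rel t0 h0 Z n \<longleftrightarrow> n = Fz Z"
  using fib_unique fib_exists by blast

lemma rho_TQ: assumes "W \<in> Regions" "W \<notin> TQ" shows "rho W \<in> TQ"
proof -
  obtain a b where ab: "W = (a,b)" by (cases W)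
  have h: "b > 0 \<or> (b = 0 \<and> a = 1)" using assms(1) ab by (simp add: Regions_iff)
  have "b > 0" "a < 0" using h assms ab by (auto simp: TQ_def)
  hence "rho W = (-a, b)" using ab by (simp add: rho_def lin_def nrm_def)
  moreover have "rho W \<in> Regions" using aut_Reg[OF rho_aut assms(1)] .
  ultimately show ?thesis using \<open>b > 0\<close> \<open>a < 0\<close> by (simp add: TQ_def)
qed

lemma fib_general:
  assumes th: "vadj t h" and Z: "Z \<in> Regions"
  shows "(Z \<in> Omega_0minus t h \<and> fib_rel t h Z (fib_edge t h Z))
       \<or> (Z \<notin> Omega_0minus t h \<and> fib_rel h t Z (fib_edge t h Z))"
proof -
  obtain g g' where g: "aut g g'" "g ` t = t0" "g ` h = h0" using std_reduction[OF th] by blast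
  have gZ: "g Z \<in> Regions" using aut_Reg[OF g(1) Z] .
  show ?thesis
  proof (cases "Z \<in> Omega_0minus t h")
    case True
    have "g Z \<in> TQ" using aut_Omega_0minus_iff[OF g(1) th Z] True g Omega_0minus_t0 by simp
    hence iff: "fib_rel t h Z n \<longleftrightarrow> n = Fz (g Z)" for n
      using aut_fib_rel_iff[OF g(1) th Z, of n] g fib_std by simp
    hence "fib_rel t h Z = (\<lambda>n. n = Fz (g Z))" by (intro ext)
    hence "fib_dir t h Z = Fz (g Z)" unfolding fib_dir_def by simp
    hence "fib_edge t h Z = Fz (g Z)" using True by (simp add: fib_edge_def)
    thus ?thesis using True iff by simp
  next
    case False
    have "g Z \<notin> TQ" using aut_Omega_0minus_iff[OF g(1) th Z] False g Omega_0minus_t0 by simp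
    hence rT: "rho (g Z) \<in> TQ" using rho_TQ gZ by simp
    have ht: "vadj h t" using vadj_sym[OF th] .
    have iff: "fib_rel h t Z n \<longleftrightarrow> n = Fz (rho (g Z))" for n
    proof -
      have "fib_rel h t Z n \<longleftrightarrow> fib_rel h0 t0 (g Z) n" using aut_fib_rel_iff[OF g(1) ht Z, of n] g by simp
      also have "\<dots> \<longleftrightarrow> fib_rel t0 h0 (rho (g Z)) n"
        using aut_fib_rel_iff[OF rho_aut vadj_t0_h0(2) gZ, of n] rho_t0 rho_h0 by simp
      also have "\<dots> \<longleftrightarrow> n = Fz (rho (g Z))" using fib_std[OF rT] .
      finally show ?thesis .
    qed
    hence "fib_rel h t Z = (\<lambda>n. n = Fz (rho (g Z)))" by (intro ext)
    hence "fib_dir h t Z = Fz (rho (g Z))" unfolding fib_dir_def by simp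
    hence "fib_edge t h Z = Fz (rho (g Z))" using False by (simp add: fib_edge_def)
    thus ?thesis using False iff by simp
  qed
qed



lemma logplus_alt: "logplus w = ln (max 1 (cmod w))"
  by (simp add: logplus_def max_def)

lemma quad_bound:
  fixes x y z m1 m2 m3 s :: complex and K :: real
  assumes eq: "x^2 + y^2 + z^2 + x*y*z = m1*x + m2*y + m3*z + s"
    and K: "1 \<le> K" "cmod m1 \<le> K" "cmod m2 \<le> K" "cmod m3 \<le> K" "cmod s \<le> K"
  shows "cmod z \<le> 4 * K * (max 1 (cmod x) * max 1 (cmod y))"
proof (rule ccontr)
  define A where "A = max 1 (cmod x)"
  define B where "B = max 1 (cmod y)"
  define M where "M = A * B"
  have A1: "1 \<le> A" "cmod x \<le> A" and B1: "1 \<le> B" "cmod y \<le> B" unfolding A_def B_def by simp_all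
  have M1: "1 \<le> M" unfolding M_def using mult_mono[OF A1(1) B1(1)] A1(1) by simp
  have AM: "A \<le> M" unfolding M_def using mult_left_mono[OF B1(1), of A] A1 by simp
  have BM: "B \<le> M" unfolding M_def using mult_right_mono[OF A1(1), of B] B1 by simp
  have Mx: "cmod x \<le> M" "cmod y \<le> M" using A1 B1 AM BM by linarith+
  have xy: "cmod x * cmod y \<le> M" unfolding M_def using mult_mono[OF A1(2) B1(2)] A1 by simp
  assume "\<not> cmod z \<le> 4 * K * (max 1 (cmod x) * max 1 (cmod y))"
  hence zb: "cmod z > 4 * K * M" by (simp add: M_def A_def B_def)
  define a where "a = x*y - m3"
  define b where "b = x^2 + y^2 - m1*x - m2*y - s"
  have e: "z*z = - (a*z + b)" using eq unfolding a_def b_def by (simp add: algebra_simps power2_eq_square)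
  have "cmod z * cmod z = cmod (a*z + b)" using e by (metis norm_minus_cancel norm_mult)
  also have "\<dots> \<le> cmod a * cmod z + cmod b" using norm_triangle_ineq[of "a*z" b] by (simp add: norm_mult)
  finally have key: "cmod z * cmod z \<le> cmod a * cmod z + cmod b" .
  have KM: "K \<le> K*M" using mult_left_mono[OF M1, of K] K(1) by simp
  have MM: "M \<le> M*M" using mult_left_mono[OF M1, of M] M1 by simp
  have MKM: "M \<le> K*M" using mult_right_mono[OF K(1), of M] M1 by simp
  have KMM: "K*M \<le> K*M*M" using mult_left_mono[OF MM, of K] K(1) by (simp add: mult.assoc)
  have MMK: "M*M \<le> K*M*M" using mult_right_mono[OF K(1), of "M*M"] by (simp add: mult.assoc)
  have a: "cmod a \<le> 2*K*M"
  proof -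
    have "cmod a \<le> cmod (x*y) + cmod m3" unfolding a_def by (rule norm_triangle_ineq4)
    thus ?thesis using xy K(4) KM MKM by (simp add: norm_mult)
  qed
  have b: "cmod b \<le> 5*K*M*M"
  proof -
    have t: "cmod b \<le> cmod (x*x) + cmod (y*y) + cmod (m1*x) + cmod (m2*y) + cmod s"
    proof -
      have "b = x*x + y*y + (-(m1*x)) + (-(m2*y)) + (-s)" unfolding b_def by (simp add: power2_eq_square)
      hence "cmod b \<le> cmod (x*x + y*y + (-(m1*x)) + (-(m2*y))) + cmod s"
        using norm_triangle_ineq[of "x*x + y*y + (-(m1*x)) + (-(m2*y))" "-s"] by simp
      also have "\<dots> \<le> cmod (x*x + y*y + (-(m1*x))) + cmod (m2*y) + cmod s"
        using norm_triangle_ineq[of "x*x + y*y + (-(m1*x))" "-(m2*y)"] by simp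
      also have "\<dots> \<le> cmod (x*x + y*y) + cmod (m1*x) + cmod (m2*y) + cmod s"
        using norm_triangle_ineq[of "x*x + y*y" "-(m1*x)"] by simp
      also have "\<dots> \<le> cmod (x*x) + cmod (y*y) + cmod (m1*x) + cmod (m2*y) + cmod s"
        using norm_triangle_ineq[of "x*x" "y*y"] by simp
      finally show ?thesis .
    qed
    have "cmod (x*x) \<le> M*M" using mult_mono[OF Mx(1) Mx(1)] M1 by (simp add: norm_mult)
    moreover have "cmod (y*y) \<le> M*M" using mult_mono[OF Mx(2) Mx(2)] M1 by (simp add: norm_mult)
    moreover have "cmod (m1*x) \<le> K*M" using mult_mono[OF K(2) Mx(1)] K(1) by (simp add: norm_mult)
    moreover have "cmod (m2*y) \<le> K*M" using mult_mono[OF K(3) Mx(2)] K(1) by (simp add: norm_mult)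
    moreover have "K \<le> K*M*M" using KM KMM by linarith
    ultimately show ?thesis using t K(5) KMM MMK by linarith
  qed
  have KMpos: "0 < K*M" using K(1) M1 by simp
  have z0: "0 < cmod z" using zb KMpos by linarith
  have "cmod a * cmod z \<le> 2*K*M * cmod z" using a z0 by (simp add: mult_right_mono)
  moreover have "2*K*M * cmod z < cmod z * cmod z / 2"
  proof -
    have "4*K*M * cmod z < cmod z * cmod z" using mult_strict_right_mono[OF zb z0] by simp
    thus ?thesis by simp
  qed
  ultimately have Aa: "cmod a * cmod z < cmod z * cmod z / 2" by linarith
  have "(4*K*M) * (4*K*M) < cmod z * cmod z"
    using mult_strict_mono[OF zb zb] KMpos z0 by simp
  moreover have "10*K*M*M \<le> (4*K*M) * (4*K*M)"
  proof -
    have "10*K \<le> 16*K*K" using mult_left_mono[OF K(1), of "16*K"] K(1) by simp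
    hence "10*K*(M*M) \<le> 16*K*K*(M*M)" using M1 by (simp add: mult_right_mono)
    thus ?thesis by (simp add: algebra_simps)
  qed
  ultimately have Bb: "cmod b < cmod z * cmod z / 2" using b by linarith
  show False using key Aa Bb by linarith
qed

lemma logplus_vertex:
  fixes x y z m1 m2 m3 s :: complex and K :: real
  assumes eq: "x^2 + y^2 + z^2 + x*y*z = m1*x + m2*y + m3*z + s"
    and K: "1 \<le> K" "cmod m1 \<le> K" "cmod m2 \<le> K" "cmod m3 \<le> K" "cmod s \<le> K"
  shows "logplus z \<le> ln (4*K) + logplus x + logplus y"
proof -
  have b: "cmod z \<le> 4 * K * (max 1 (cmod x) * max 1 (cmod y))" using quad_bound[OF assms] .
  have p: "0 < max 1 (cmod x)" "0 < max 1 (cmod y)" "0 < 4*K" using K(1) by auto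
  have "max 1 (cmod z) \<le> 4 * K * (max 1 (cmod x) * max 1 (cmod y))"
  proof -
    have "1 \<le> 4 * K * (max 1 (cmod x) * max 1 (cmod y))"
    proof -
      have "1 * 1 \<le> max 1 (cmod x) * max 1 (cmod y)" by (rule mult_mono) auto
      moreover have "1 \<le> 4*K" using K(1) by simp
      ultimately show ?thesis using mult_mono[of 1 "4*K" 1 "max 1 (cmod x) * max 1 (cmod y)"] by simp
    qed
    thus ?thesis using b by simp
  qed
  hence "ln (max 1 (cmod z)) \<le> ln (4 * K * (max 1 (cmod x) * max 1 (cmod y)))" by simp
  also have "\<dots> = ln (4*K) + ln (max 1 (cmod x)) + ln (max 1 (cmod y))"
    using p by (simp add: ln_mult)
  finally show ?thesis by (simp add: logplus_alt)
qed



lemma vertex_colors: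
  assumes vc: "valid_coloring CR CE" and adj: "fadj X Y" "fadj X Z" "fadj Y Z"
  shows "CR X \<noteq> CR Y \<and> CR X \<noteq> CR Z \<and> CR Y \<noteq> CR Z \<and> CR X \<in> {1,2,3} \<and> CR Y \<in> {1,2,3} \<and> CR Z \<in> {1,2,3}"
proof -
  let ?N1 = "nrm (fst X + fst Y, snd X + snd Y)" and ?N2 = "nrm (fst X - fst Y, snd X - snd Y)"
  have Z: "Z = ?N1 \<or> Z = ?N2" using common_nbr[OF adj] .
  have N: "fadj X ?N1" "fadj Y ?N1" "fadj X ?N2" "fadj Y ?N2" "?N1 \<noteq> ?N2" using nrm_sum_adj[OF adj(1)] by auto
  obtain W where W: "fadj X W" "fadj Y W" "Z \<noteq> W"
  proof (cases "Z = ?N1")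
    case True thus ?thesis using that[of ?N2] N by simp
  next
    case False thus ?thesis using that[of ?N1] N by simp
  qed
  have ed: "edge_data X Y Z W"
    unfolding edge_data_def
    using Verts_insert[OF adj(1) adj(3) adj(2)] Verts_insert[OF adj(1) W(2) W(1)] fadj_neq adj W by blast
  have "CE {X, Y} = CR Z \<and> CR Z = CR W \<and> CE {X, Y} \<noteq> CR X \<and> CE {X, Y} \<noteq> CR Y \<and> CR X \<noteq> CR Y"
    using vc ed unfolding valid_coloring_def by blast
  moreover have "X \<in> Regions" "Y \<in> Regions" "Z \<in> Regions" using adj fadj_Regions by auto
  ultimately show ?thesis using vc unfolding valid_coloring_def by auto
qed

lemma markoff_vertex:
  assumes mk: "markoff_map CR CE p q r s \<phi>" and vc: "valid_coloring CR CE"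
    and adj: "fadj X Y" "fadj X Z" "fadj Y Z"
  shows "(\<phi> X)^2 + (\<phi> Y)^2 + (\<phi> Z)^2 + \<phi> X * \<phi> Y * \<phi> Z
     = mu_col p q r (CR X) * \<phi> X + mu_col p q r (CR Y) * \<phi> Y + mu_col p q r (CR Z) * \<phi> Z + s"
proof -
  have V: "{X, Y, Z} \<in> Verts" using Verts_insert[OF adj(1) adj(3) adj(2)] .
  have M: "(\<phi> A)^2 + (\<phi> B)^2 + (\<phi> C)^2 + \<phi> A * \<phi> B * \<phi> C = p * \<phi> A + q * \<phi> B + r * \<phi> C + s"
    if "{A, B, C} = {X, Y, Z}" "CR A = 1" "CR B = 2" "CR C = 3" for A B C
    using mk that V unfolding markoff_map_def by metis
  have c: "CR X \<noteq> CR Y" "CR X \<noteq> CR Z" "CR Y \<noteq> CR Z" "CR X \<in> {1,2,3}" "CR Y \<in> {1,2,3}" "CR Z \<in> {1,2,3}"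
    using vertex_colors[OF vc adj] by auto
  consider "CR X = 1" "CR Y = 2" "CR Z = 3" | "CR X = 1" "CR Y = 3" "CR Z = 2"
    | "CR X = 2" "CR Y = 1" "CR Z = 3" | "CR X = 2" "CR Y = 3" "CR Z = 1"
    | "CR X = 3" "CR Y = 1" "CR Z = 2" | "CR X = 3" "CR Y = 2" "CR Z = 1"
    using c by auto
  thus ?thesis
  proof cases
    case 1 thus ?thesis using M[of X Y Z] by (simp add: mu_col_def)
  next
    case 2 thus ?thesis using M[of X Z Y] by (simp add: mu_col_def insert_commute algebra_simps)
  next
    case 3 thus ?thesis using M[of Y X Z] by (simp add: mu_col_def insert_commute algebra_simps)
  next
    case 4 thus ?thesis using M[of Z X Y] by (simp add: mu_col_def insert_commute algebra_simps)
  next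
    case 5 thus ?thesis using M[of Y Z X] by (simp add: mu_col_def insert_commute algebra_simps)
  next
    case 6 thus ?thesis using M[of Z Y X] by (simp add: mu_col_def insert_commute algebra_simps)
  qed
qed

lemma mu_col_bound: "cmod (mu_col p q r i) \<le> 1 + cmod p + cmod q + cmod r + cmod s"
  by (simp add: mu_col_def)

lemma fib_bound:
  assumes th: "vadj t h" and f: "fib_rel t h Z n"
    and Lnn: "\<And>W. 0 \<le> L W" and base: "\<And>W. W \<in> t \<inter> h \<Longrightarrow> L W \<le> \<kappa>"
    and vert: "\<And>X Y Z. fadj X Y \<Longrightarrow> fadj X Z \<Longrightarrow> fadj Y Z \<Longrightarrow> L Z \<le> L X + L Y"
  shows "L Z \<le> \<kappa> * real n"
  using f
proof (induction rule: fib_rel.induct)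
  case (base Z) thus ?case using assms(4) by simp
next
  case (step Z X Y a b)
  have d: "X \<noteq> Z" "Y \<noteq> Z" using step.hyps(6,7) by auto
  have adj: "fadj X Y" "fadj X Z" "fadj Y Z"
    using Verts_adj[OF step.hyps(5)] step.hyps(4) d by auto
  have "L Z \<le> L X + L Y" using vert[OF adj] .
  also have "\<dots> \<le> \<kappa> * real a + \<kappa> * real b" using step.IH by simp
  finally show ?case by (simp add: distrib_left)
qed

theorem lemma4p4:
  fixes CR :: "region \<Rightarrow> nat" and CE :: "region set \<Rightarrow> nat"
    and p q r s :: complex and \<phi> :: "region \<Rightarrow> complex"
    and t h :: "region set"
  assumes "valid_coloring CR CE"
    and "markoff_map CR CE p q r s \<phi>"
    and "vadj t h"
  shows "\<exists>\<kappa>>0. \<forall>X\<in>Regions. logplus (\<phi> X) \<le> \<kappa> * real (fib_edge t h X)"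
proof -
  define K where "K = 1 + cmod p + cmod q + cmod r + cmod s"
  define c where "c = ln (4*K)"
  define L where "L W = logplus (\<phi> W) + c" for W
  have K1: "1 \<le> K" unfolding K_def by simp
  have c0: "0 < c" unfolding c_def using K1 by simp
  have lp0: "0 \<le> logplus w" for w by (simp add: logplus_def)
  have Lpos: "0 < L W" for W unfolding L_def using lp0[of "\<phi> W"] c0 by simp
  have vert: "L Z \<le> L X + L Y" if adj: "fadj X Y" "fadj X Z" "fadj Y Z" for X Y Z
  proof -
    have "logplus (\<phi> Z) \<le> c + logplus (\<phi> X) + logplus (\<phi> Y)"
      unfolding c_def
      by (rule logplus_vertex[OF markoff_vertex[OF assms(2,1) adj] K1])
         (simp_all add: K_def mu_col_bound)
    thus ?thesis unfolding L_def using c0 by simp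
  qed
  have tV: "t \<in> Verts" using assms(3) by (simp add: vadj_def)
  have fin: "finite (t \<inter> h)" using Verts_card[OF tV] by simp
  have ne: "t \<inter> h \<noteq> {}" using assms(3) by (auto simp: vadj_def)
  define \<kappa> where "\<kappa> = sum L (t \<inter> h)"
  have k0: "0 < \<kappa>" unfolding \<kappa>_def using fin ne Lpos by (simp add: sum_pos)
  have base: "L W \<le> \<kappa>" if "W \<in> t \<inter> h" for W
    unfolding \<kappa>_def using member_le_sum[OF that _ fin, of L] Lpos less_imp_le by blast
  have base': "L W \<le> \<kappa>" if "W \<in> h \<inter> t" for W using base that by blast
  have "\<forall>X\<in>Regions. logplus (\<phi> X) \<le> \<kappa> * real (fib_edge t h X)"
  proof
    fix X assume X: "X \<in> Regions"
    have "L X \<le> \<kappa> * real (fib_edge t h X)"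
      using fib_general[OF assms(3) X]
    proof
      assume "X \<in> Omega_0minus t h \<and> fib_rel t h X (fib_edge t h X)"
      hence f: "fib_rel t h X (fib_edge t h X)" by blast
      have nn: "0 \<le> L W" for W using Lpos[of W] by simp
      show ?thesis by (rule fib_bound[where L=L and \<kappa>=\<kappa>, OF assms(3) f nn base vert])
    next
      assume "X \<notin> Omega_0minus t h \<and> fib_rel h t X (fib_edge t h X)"
      hence f: "fib_rel h t X (fib_edge t h X)" by blast
      have nn: "0 \<le> L W" for W using Lpos[of W] by simp
      show ?thesis by (rule fib_bound[where L=L and \<kappa>=\<kappa>, OF vadj_sym[OF assms(3)] f nn base' vert])
    qed
    thus "logplus (\<phi> X) \<le> \<kappa> * real (fib_edge t h X)" unfolding L_def using c0 by simp
  qed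
  thus ?thesis using k0 by blast
qed


end
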